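(* For every $n\ge 0$, $$\mathsf{Pop}(\mathrm{Tam}_{n+1};q)=\sum_{k=0}^{\lfloor n/2\rfloor}\frac{1}{k+1}\binom{2k}{k}\binom{n}{2k}q^{\,n-k}.$$ In particular, setting $q=1$, for every $n\ge 1$ the image $\mathsf{Pop}_{\mathrm{Tam}_n}(\mathrm{Tam}_n)$ has exactly $M_{n-1}$ elements, where $M_m=\sum_{k\ge 0}\binom{m}{2k}C_k$ is the $m$-th Motzkin number ($C_k$ the Catalan numbers).
   Context: For a finite lattice $L$, $\mathsf{Pop}_L(x)=\bigwedge(\{y\in L: y\lessdot x\}\cup\{x\})$, where $y\lessdot x$ means $x$ covers $y$. For $b\in L$, $\mathscr{U}_L(b)$ is the set of elements of $L$ that cover $b$, and $\mathsf{Pop}(L;q)=\sum_{b\in\mathsf{Pop}_L(L)}q^{|\mathscr{U}_L(b)|}$. $\mathrm{Tam}_n$ is the $n$-th Tamari lattice (on Dyck paths of semilength $n$); equivalently it is isomorphic to the lattice $\mathrm{Av}_n(312)$ of $312$-avoiding permutations of $[n]$ under the right weak order (in which $y\lessdot x$ iff $y$ is obtained from $x$ by swapping two adjacent entries $x_i>x_{i+1}$). *)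

theory Defs
  imports Complex_Main
begin

definition covers :: "'a set \<Rightarrow> ('a \<Rightarrow> 'a \<Rightarrow> bool) \<Rightarrow> 'a \<Rightarrow> 'a \<Rightarrow> bool" where
  "covers L le y x \<longleftrightarrow> y \<in> L \<and> x \<in> L \<and> le y x \<and> y \<noteq> x \<and>
     \<not> (\<exists>z\<in>L. le y z \<and> le z x \<and> z \<noteq> y \<and> z \<noteq> x)"

definition is_glb :: "'a set \<Rightarrow> ('a \<Rightarrow> 'a \<Rightarrow> bool) \<Rightarrow> 'a set \<Rightarrow> 'a \<Rightarrow> bool" where
  "is_glb L le S m \<longleftrightarrow> m \<in> L \<and> (\<forall>s\<in>S. le m s) \<and> (\<forall>z\<in>L. (\<forall>s\<in>S. le z s) \<longrightarrow> le z m)"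

definition meet :: "'a set \<Rightarrow> ('a \<Rightarrow> 'a \<Rightarrow> bool) \<Rightarrow> 'a set \<Rightarrow> 'a" where
  "meet L le S = (THE m. is_glb L le S m)"

definition Pop :: "'a set \<Rightarrow> ('a \<Rightarrow> 'a \<Rightarrow> bool) \<Rightarrow> 'a \<Rightarrow> 'a" where
  "Pop L le x = meet L le ({y. covers L le y x} \<union> {x})"

definition upcovers :: "'a set \<Rightarrow> ('a \<Rightarrow> 'a \<Rightarrow> bool) \<Rightarrow> 'a \<Rightarrow> 'a set" where
  "upcovers L le b = {x. covers L le b x}"

definition Pop_poly :: "'a set \<Rightarrow> ('a \<Rightarrow> 'a \<Rightarrow> bool) \<Rightarrow> real \<Rightarrow> real" where
  "Pop_poly L le q = (\<Sum>b\<in>Pop L le ` L. q ^ card (upcovers L le b))"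

definition perms :: "nat \<Rightarrow> nat list set" where
  "perms n = {xs. distinct xs \<and> set xs = {1..n}}"

definition avoids312 :: "nat list \<Rightarrow> bool" where
  "avoids312 xs \<longleftrightarrow> \<not> (\<exists>i j k. i < j \<and> j < k \<and> k < length xs \<and> xs ! j < xs ! k \<and> xs ! k < xs ! i)"

definition Tam :: "nat \<Rightarrow> nat list set" where
  "Tam n = {xs \<in> perms n. avoids312 xs}"

text \<open>(Left) inversion set by values: pairs (a,b), a<b, with b occurring before a.
  The right weak order is containment of these sets; its cover relations are
  swaps of adjacent descents.\<close>
definition invs :: "nat list \<Rightarrow> (nat \<times> nat) set" where
  "invs xs = {(a, b). a < b \<and> (\<exists>i j. i < j \<and> j < length xs \<and> xs ! i = b \<and> xs ! j = a)}"

definition weak_le :: "nat list \<Rightarrow> nat list \<Rightarrow> bool" where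
  "weak_le xs ys \<longleftrightarrow> invs xs \<subseteq> invs ys"

definition catalan :: "nat \<Rightarrow> nat" where
  "catalan k = ((2 * k) choose k) div (k + 1)"

definition motzkin :: "nat \<Rightarrow> nat" where
  "motzkin m = (\<Sum>k\<le>m. (m choose (2 * k)) * catalan k)"

end

theory Submission
  imports Defs "HOL-Computational_Algebra.Formal_Power_Series"
begin

lemma gch_step: "((a::real) gchoose Suc k) = (a gchoose k) * (a - of_nat k) / of_nat (Suc k)"
  by (metis gbinomial_absorb_comp gbinomial_absorption mult.commute
    nonzero_mult_div_cancel_left of_nat_neq_0)

definition Cr :: "nat \<Rightarrow> real" where "Cr k = fact (2*k) / (fact k * fact (k+1))"

lemma binom_central_rel: "(k+1) * ((2*k) choose (k+1)) = k * ((2*k) choose k)"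
proof (cases k)
  case 0 then show ?thesis by simp
next
  case (Suc j)
  have "Suc k * (Suc (k + j) choose Suc k) = Suc j * (Suc (k + j) choose k)"
    by (rule Suc_times_binomial_add)
  then show ?thesis using Suc by (simp add: mult_2)
qed

lemma catalan_mult: "(k+1) * catalan k = (2*k) choose k"
proof -
  have le: "(2*k) choose (k+1) \<le> (2*k) choose k"
  proof -
    have "(k+1) * ((2*k) choose (k+1)) \<le> (k+1) * ((2*k) choose k)"
      using binom_central_rel[of k] by simp
    then show ?thesis by (subst (asm) mult_le_cancel1) simp
  qed
  have "(2*k) choose k = (k+1) * ((2*k choose k) - (2*k choose (k+1)))"
    using binom_central_rel[of k] le by (simp add: algebra_simps diff_mult_distrib2)
  then show ?thesis unfolding catalan_def
    by (metis dvd_mult_div_cancel dvd_triv_left)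
qed

lemma real_catalan: "real (catalan k) = Cr k"
proof -
  have "real ((k+1) * catalan k) = real ((2*k) choose k)" using catalan_mult by metis
  then have h2: "(real k + 1) * real (catalan k) = fact (2*k) / (fact k * fact k)"
    by (simp add: binomial_fact algebra_simps)
  have pos: "real k + 1 \<noteq> 0" by simp
  have e: "real (catalan k) = fact (2*k) / (fact k * fact k) / (real k + 1)"
    unfolding h2[symmetric] using pos by simp
  have f: "(fact (k+1)::real) = (real k + 1) * fact k" by simp
  show ?thesis unfolding Cr_def e f by (simp add: field_simps)
qed

lemma aux: "(a::real) \<noteq> 0 \<Longrightarrow> x + 1 \<noteq> 0 \<Longrightarrow> x + 2 \<noteq> 0 \<Longrightarrow>
   (2*x+2)*(2*x+1)*F / (((x+1)*a) * ((x+2)*(x+1)*a)) = F/(a*((x+1)*a)) * ((4*x+2)/(x+2))"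
  by (simp add: divide_simps) (simp add: algebra_simps)

lemma s_Suc: "((1/2::real) gchoose Suc i) * (-4)^(Suc i) = -2 * Cr i"
proof (induction i)
  case 0 then show ?case by (simp add: Cr_def)
next
  case (Suc i)
  have "((1/2::real) gchoose Suc (Suc i)) * (-4)^(Suc (Suc i))
      = (((1/2::real) gchoose Suc i) * (-4)^(Suc i)) * ((1/2 - of_nat (Suc i)) * (-4) / of_nat (Suc (Suc i)))"
    by (subst gch_step) (simp add: field_simps)
  also have "\<dots> = -2 * Cr i * ((1/2 - of_nat (Suc i)) * (-4) / of_nat (Suc (Suc i)))"
    using Suc by simp
  also have "\<dots> = -2 * Cr (Suc i)"
  proof -
    have f1: "(fact (2 * Suc i)::real) = (2 * real i + 2) * (2 * real i + 1) * fact (2*i)"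
    proof -
      have "2 * Suc i = Suc (Suc (2*i))" by simp
      then have "(fact (2 * Suc i)::real) = of_nat (Suc (Suc (2*i))) * (of_nat (Suc (2*i)) * fact (2*i))"
        by (simp only: fact_Suc)
      then show ?thesis by (simp add: distrib_left distrib_right mult.assoc)
    qed
    have f2: "(fact (Suc i)::real) = (real i + 1) * fact i" by simp
    have f3: "(fact (Suc i + 1)::real) = (real i + 2) * (real i + 1) * fact i"
    proof -
      have "(fact (Suc i + 1)::real) = of_nat (Suc (Suc i)) * (of_nat (Suc i) * fact i)"
        by (simp only: Suc_eq_plus1[symmetric] fact_Suc)
      then show ?thesis by (simp add: add.commute)
    qed
    have f4: "(fact (i + 1)::real) = (real i + 1) * fact i" by simp
    have "Cr (Suc i) = Cr i * ((4 * real i + 2) / (real i + 2))"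
    proof -
      have n1: "(fact i::real) \<noteq> 0" by simp
      have n2: "real i + 1 \<noteq> 0" "real i + 2 \<noteq> 0" by linarith+
      show ?thesis unfolding Cr_def f1 f2 f3 f4 using aux[OF n1 n2] by simp
    qed
    moreover have "(1/2 - of_nat (Suc i)) * (-4) / of_nat (Suc (Suc i)) = ((4 * real i + 2) / (real i + 2)::real)"
      by (simp add: field_simps)
    ultimately show ?thesis by simp
  qed
  finally show ?case .
qed

definition sq :: "nat \<Rightarrow> real" where "sq j = ((1/2::real) gchoose j) * (-4)^j"

lemma sq0: "sq 0 = 1" by (simp add: sq_def)
lemma sqS: "sq (Suc i) = -2 * Cr i" using s_Suc by (simp add: sq_def)

lemma Cr_conv: "(\<Sum>i\<le>k. Cr i * Cr (k - i)) = Cr (Suc k)"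
proof -
  have "(\<Sum>j=0..Suc (Suc k). ((1/2::real) gchoose j) * ((1/2) gchoose (Suc (Suc k) - j))) = (1/2 + 1/2::real) gchoose Suc (Suc k)"
    by (rule gbinomial_Vandermonde)
  also have "\<dots> = 0"
  proof -
    have "(1::real) gchoose Suc (Suc k) = of_nat (1 choose Suc (Suc k))"
      by (metis binomial_gbinomial of_nat_1)
    then show ?thesis by simp
  qed
  finally have v: "(\<Sum>j=0..Suc (Suc k). ((1/2::real) gchoose j) * ((1/2) gchoose (Suc (Suc k) - j))) = 0" .
  have "(\<Sum>j=0..Suc (Suc k). sq j * sq (Suc (Suc k) - j)) =
        (-4)^(Suc (Suc k)) * (\<Sum>j=0..Suc (Suc k). ((1/2::real) gchoose j) * ((1/2) gchoose (Suc (Suc k) - j)))"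
    unfolding sum_distrib_left
  proof (rule sum.cong)
    fix j assume "j \<in> {0..Suc (Suc k)}"
    then have "(-4::real)^(Suc (Suc k)) = (-4)^j * (-4)^(Suc (Suc k) - j)"
      by (simp add: power_add[symmetric])
    then show "sq j * sq (Suc (Suc k) - j) = (-4)^(Suc (Suc k)) * (((1/2::real) gchoose j) * ((1/2) gchoose (Suc (Suc k) - j)))"
      unfolding sq_def by (simp add: algebra_simps)
  qed simp
  with v have z: "(\<Sum>j=0..Suc (Suc k). sq j * sq (Suc (Suc k) - j)) = 0" by simp
  have "(\<Sum>j=0..Suc (Suc k). sq j * sq (Suc (Suc k) - j)) =
        sq 0 * sq (Suc (Suc k)) + (\<Sum>j=Suc 0..Suc k. sq j * sq (Suc (Suc k) - j)) + sq (Suc (Suc k)) * sq 0"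
    by (simp add: sum.atLeast0_atMost_Suc sum.atLeast_Suc_atMost)
  also have "(\<Sum>j=Suc 0..Suc k. sq j * sq (Suc (Suc k) - j)) = (\<Sum>i=0..k. sq (Suc i) * sq (Suc (Suc k) - Suc i))"
    by (rule sum.shift_bounds_cl_Suc_ivl)
  also have "\<dots> = (\<Sum>i=0..k. 4 * (Cr i * Cr (k - i)))"
  proof (rule sum.cong)
    fix i assume "i \<in> {0..k}"
    then have "Suc (Suc k) - Suc i = Suc (k - i)" by auto
    then show "sq (Suc i) * sq (Suc (Suc k) - Suc i) = 4 * (Cr i * Cr (k - i))"
      by (simp add: sqS)
  qed simp
  finally have "0 = 2 * (-2 * Cr (Suc k)) + 4 * (\<Sum>i=0..k. Cr i * Cr (k - i))"
    using z by (simp add: sq0 sqS sum_distrib_left)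
  then show ?thesis by (simp add: atLeast0AtMost)
qed

lemma catalan_conv: "(\<Sum>i\<le>k. catalan i * catalan (k - i)) = catalan (Suc k)"
proof -
  have "real (\<Sum>i\<le>k. catalan i * catalan (k - i)) = real (catalan (Suc k))"
    by (simp add: real_catalan Cr_conv)
  then show ?thesis by (simp only: of_nat_eq_iff)
qed


definition before :: "nat list \<Rightarrow> nat \<Rightarrow> nat \<Rightarrow> bool" where
  "before xs u v \<longleftrightarrow> (\<exists>i j. i < j \<and> j < length xs \<and> xs!i = u \<and> xs!j = v)"

lemma invs_before: "invs xs = {(a,b). a < b \<and> before xs b a}"
  by (auto simp: invs_def before_def)

lemma before_Nil[simp]: "\<not> before [] u v"
  by (simp add: before_def)

lemma before_Cons: "before (x#xs) u v \<longleftrightarrow> (u = x \<and> v \<in> set xs) \<or> before xs u v"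
proof
  assume "before (x#xs) u v"
  then obtain i j where ij: "i < j" "j < length (x#xs)" "(x#xs)!i = u" "(x#xs)!j = v"
    unfolding before_def by blast
  show "(u = x \<and> v \<in> set xs) \<or> before xs u v"
  proof (cases i)
    case 0
    then have "u = x" using ij by simp
    moreover have "v \<in> set xs" using ij by (cases j) auto
    ultimately show ?thesis by simp
  next
    case (Suc i')
    then obtain j' where "j = Suc j'" using ij by (cases j) auto
    then have "before xs u v" unfolding before_def using ij Suc
      by (intro exI[of _ i'] exI[of _ j']) auto
    then show ?thesis by simp
  qed
next
  assume "(u = x \<and> v \<in> set xs) \<or> before xs u v"
  then show "before (x#xs) u v"
  proof
    assume "u = x \<and> v \<in> set xs"
    then obtain j where "j < length xs" "xs!j = v" "u = x" by (auto simp: in_set_conv_nth)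
    then show ?thesis unfolding before_def by (intro exI[of _ 0] exI[of _ "Suc j"]) auto
  next
    assume "before xs u v"
    then obtain i j where "i < j" "j < length xs" "xs!i = u" "xs!j = v" unfolding before_def by blast
    then show ?thesis unfolding before_def by (intro exI[of _ "Suc i"] exI[of _ "Suc j"]) auto
  qed
qed

lemma before_set: "before xs u v \<Longrightarrow> u \<in> set xs \<and> v \<in> set xs"
  unfolding before_def by auto

lemma before_append: "before (xs @ ys) u v \<longleftrightarrow> before xs u v \<or> before ys u v \<or> (u \<in> set xs \<and> v \<in> set ys)"
  by (induction xs) (auto simp: before_Cons)

lemma before_asym: "distinct xs \<Longrightarrow> before xs u v \<Longrightarrow> \<not> before xs v u"
  by (induction xs) (auto simp: before_Cons dest: before_set)

lemma before_irrefl: "distinct xs \<Longrightarrow> \<not> before xs u u"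
  using before_asym by blast

lemma before_total: "u \<in> set xs \<Longrightarrow> v \<in> set xs \<Longrightarrow> u \<noteq> v \<Longrightarrow> before xs u v \<or> before xs v u"
  by (induction xs) (auto simp: before_Cons)

lemma before_trans: "distinct xs \<Longrightarrow> before xs u v \<Longrightarrow> before xs v w \<Longrightarrow> before xs u w"
  by (induction xs) (auto simp: before_Cons dest: before_set)

lemma before_unique:
  "distinct xs \<Longrightarrow> distinct ys \<Longrightarrow> set xs = set ys \<Longrightarrow> (\<forall>u v. before xs u v \<longleftrightarrow> before ys u v) \<Longrightarrow> xs = ys"
proof (induction xs arbitrary: ys)
  case Nil then show ?case by simp
next
  case (Cons x xs)
  then obtain y ys' where ys: "ys = y # ys'" by (cases ys) auto
  have "x = y"
  proof (rule ccontr)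
    assume ne: "x \<noteq> y"
    then have "y \<in> set xs" using Cons.prems ys by auto
    then have "before (x#xs) x y" by (simp add: before_Cons)
    then have "before (y#ys') x y" using Cons.prems ys by simp
    then have "y \<in> set ys'" using ne by (auto simp: before_Cons dest: before_set)
    then show False using Cons.prems ys by simp
  qed
  have s: "set xs = set ys'" using Cons.prems ys \<open>x = y\<close> by auto
  have "\<forall>u v. before xs u v \<longleftrightarrow> before ys' u v"
  proof (intro allI)
    fix u v
    have "before xs u v \<longleftrightarrow> before (x#xs) u v \<and> u \<noteq> x"
      using Cons.prems by (auto simp: before_Cons dest: before_set)
    moreover have "before ys' u v \<longleftrightarrow> before (y#ys') u v \<and> u \<noteq> y"
      using Cons.prems ys by (auto simp: before_Cons dest: before_set)
    ultimately show "before xs u v \<longleftrightarrow> before ys' u v" using Cons.prems ys \<open>x = y\<close> by simp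
  qed
  then have "xs = ys'" using Cons.IH[of ys'] Cons.prems ys s by simp
  then show ?case using ys \<open>x = y\<close> by simp
qed

lemma invs_inj:
  assumes "distinct xs" "distinct ys" "set xs = set ys" "invs xs = invs ys"
  shows "xs = ys"
proof (rule before_unique[OF assms(1-3)], intro allI)
  have key: "before xs u v \<Longrightarrow> before ys u v" if d1: "distinct xs" and d2: "distinct ys" and s: "set xs = set ys"
      and i: "invs xs = invs ys" for xs ys u v
  proof -
    assume b: "before xs u v"
    then have uv: "u \<in> set xs" "v \<in> set xs" "u \<noteq> v" using before_set before_irrefl[OF d1] by blast+
    show "before ys u v"
    proof (cases "v < u")
      case True
      then have "(v,u) \<in> invs xs" using b by (simp add: invs_before)
      then have "(v,u) \<in> invs ys" using i by simp
      then show ?thesis by (simp add: invs_before)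
    next
      case False
      then have "u < v" using uv by simp
      have "\<not> before xs v u" using before_asym[OF d1 b] .
      then have "(u,v) \<notin> invs xs" using \<open>u < v\<close> by (simp add: invs_before)
      then have "(u,v) \<notin> invs ys" using i by simp
      then have "\<not> before ys v u" using \<open>u < v\<close> by (simp add: invs_before)
      then show ?thesis using before_total[of u ys v] uv s by auto
    qed
  qed
  fix u v
  show "before xs u v \<longleftrightarrow> before ys u v"
    using key[of xs ys u v] key[of ys xs u v] assms by metis
qed

lemma invs_append: "invs (xs @ ys) = invs xs \<union> invs ys \<union> {(a,b). a < b \<and> b \<in> set xs \<and> a \<in> set ys}"
  by (auto simp: invs_before before_append)

lemma invs_single[simp]: "invs [x] = {}"
  by (auto simp: invs_before before_Cons)

lemma interval_avoids312:
  assumes d: "distinct xs"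
    and iv: "\<And>a b c. (a,b) \<in> invs xs \<Longrightarrow> a < c \<Longrightarrow> c < b \<Longrightarrow> c \<in> set xs \<Longrightarrow> (a,c) \<in> invs xs"
  shows "avoids312 xs"
  unfolding avoids312_def
proof (clarify)
  fix i j k assume ijk: "i < j" "j < k" "k < length xs" "xs!j < xs!k" "xs!k < xs!i"
  have "(xs!j, xs!i) \<in> invs xs"
  proof -
    have "xs!j < xs!i" "j < length xs" using ijk by auto
    then show ?thesis unfolding invs_def using \<open>i < j\<close> by blast
  qed
  then have "(xs!j, xs!k) \<in> invs xs" using iv ijk by auto
  then obtain i' j' where "i' < j'" "j' < length xs" "xs!i' = xs!k" "xs!j' = xs!j"
    unfolding invs_def by auto
  then have "i' = k" "j' = j" using d ijk by (auto simp: nth_eq_iff_index_eq)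
  then show False using \<open>i' < j'\<close> ijk by simp
qed

lemma Tam_interval:
  assumes "xs \<in> Tam N" "(a,b) \<in> invs xs" "a < c" "c < b" "c \<in> set xs"
  shows "(a,c) \<in> invs xs"
proof -
  have d: "distinct xs" and av: "avoids312 xs" using assms(1) by (auto simp: Tam_def perms_def)
  obtain i j where ij: "i < j" "j < length xs" "xs!i = b" "xs!j = a"
    using assms(2) unfolding invs_def by auto
  obtain k where k: "k < length xs" "xs!k = c" using assms(5) by (auto simp: in_set_conv_nth)
  have "k \<noteq> j" using k ij assms by auto
  show ?thesis
  proof (cases "k < j")
    case True then show ?thesis unfolding invs_def using k ij assms by auto
  next
    case False
    then have "j < k" using \<open>k \<noteq> j\<close> by simp
    then show ?thesis using av ij k assms unfolding avoids312_def by (metis)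
  qed
qed


definition lam :: "(nat \<Rightarrow> nat) \<Rightarrow> bool" where
  "lam r \<longleftrightarrow> (\<forall>a b. a < b \<longrightarrow> b \<le> a + r a \<longrightarrow> b + r b \<le> a + r a)"

definition Brk :: "nat \<Rightarrow> (nat \<Rightarrow> nat) set" where
  "Brk N = {r. lam r \<and> (\<forall>a. r a \<noteq> 0 \<longrightarrow> 0 < a \<and> a + r a \<le> N)}"

definition R :: "(nat \<Rightarrow> nat) \<Rightarrow> (nat \<times> nat) set" where
  "R r = {(a,b). 0 < a \<and> a < b \<and> b \<le> a + r a}"

lemma lamD: "lam r \<Longrightarrow> a < b \<Longrightarrow> b \<le> a + r a \<Longrightarrow> b + r b \<le> a + r a"
  unfolding lam_def by blast

lemma BrkD: assumes "r \<in> Brk N"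
  shows "lam r" "r a \<noteq> 0 \<Longrightarrow> 0 < a" "r a \<noteq> 0 \<Longrightarrow> a + r a \<le> N"
  using assms unfolding Brk_def by auto

lemma interval_set:
  assumes f: "finite S" and gt: "\<forall>b\<in>S. a < b" and cl: "\<forall>b\<in>S. \<forall>c. a < c \<longrightarrow> c < b \<longrightarrow> c \<in> S"
  shows "S = {a<..a + card S}"
proof (cases "S = {}")
  case True then show ?thesis by simp
next
  case False
  define M where "M = Max S"
  have M: "M \<in> S" "\<forall>b\<in>S. b \<le> M" using f False unfolding M_def by auto
  have "S = {a<..M}"
  proof
    show "S \<subseteq> {a<..M}" using M gt by auto
    show "{a<..M} \<subseteq> S"
    proof
      fix c assume "c \<in> {a<..M}"
      then show "c \<in> S" using cl M by (cases "c = M") auto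
    qed
  qed
  moreover have "a + card {a<..M} = M" using M gt by auto
  ultimately show ?thesis by simp
qed

lemma Tam_invs_range: assumes "xs \<in> Tam N" "(a,b) \<in> invs xs"
  shows "0 < a" "a < b" "b \<le> N" "a \<in> set xs" "b \<in> set xs"
proof -
  have s: "set xs = {1..N}" using assms(1) by (simp add: Tam_def perms_def)
  have "a < b" "before xs b a" using assms(2) by (auto simp: invs_before)
  then have "a \<in> set xs" "b \<in> set xs" using before_set by auto
  then show "0 < a" "a < b" "b \<le> N" "a \<in> set xs" "b \<in> set xs" using s \<open>a < b\<close> by auto
qed

lemma Tam_to_Brk:
  assumes xs: "xs \<in> Tam N"
  shows "\<exists>r\<in>Brk N. invs xs = R r"
proof -
  have d: "distinct xs" and s: "set xs = {1..N}" using xs by (auto simp: Tam_def perms_def)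
  define S where "S a = {b. (a,b) \<in> invs xs}" for a
  define r where "r a = card (S a)" for a
  have fin: "finite (S a)" for a
    by (rule finite_subset[of _ "{..N}"]) (auto simp: S_def dest: Tam_invs_range[OF xs])
  have Seq: "S a = {a<..a + r a}" for a
    unfolding r_def
  proof (rule interval_set[OF fin])
    show "\<forall>b\<in>S a. a < b" by (auto simp: S_def dest: Tam_invs_range[OF xs])
    show "\<forall>b\<in>S a. \<forall>c. a < c \<longrightarrow> c < b \<longrightarrow> c \<in> S a"
    proof (intro ballI allI impI)
      fix b c assume b: "b \<in> S a" and c: "a < c" "c < b"
      have "(a,b) \<in> invs xs" using b by (simp add: S_def)
      moreover have "c \<in> set xs" using Tam_invs_range[OF xs \<open>(a,b) \<in> invs xs\<close>] c s by auto
      ultimately show "c \<in> S a" using Tam_interval[OF xs] c by (simp add: S_def)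
    qed
  qed
  have inv_iff: "(a,b) \<in> invs xs \<longleftrightarrow> a < b \<and> b \<le> a + r a" for a b
    using Seq[of a] by (auto simp: S_def)
  have "invs xs = R r"
  proof (auto simp: R_def)
    fix a b assume "(a,b) \<in> invs xs"
    then show "0 < a" "a < b" "b \<le> a + r a" using Tam_invs_range[OF xs] inv_iff by auto
  next
    fix a b assume "0 < a" "a < b" "b \<le> a + r a"
    then show "(a,b) \<in> invs xs" using inv_iff by auto
  qed
  moreover have "r \<in> Brk N"
    unfolding Brk_def lam_def
  proof (intro CollectI conjI allI impI)
    fix a b assume ab: "a < b" "b \<le> a + r a"
    show "b + r b \<le> a + r a"
    proof (cases "r b = 0")
      case True then show ?thesis using ab by simp
    next
      case False
      have i1: "(a,b) \<in> invs xs" using ab inv_iff by simp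
      have i2: "(b, b + r b) \<in> invs xs" using False inv_iff by simp
      have "before xs b a" "before xs (b + r b) b" using i1 i2 by (auto simp: invs_before)
      then have "before xs (b + r b) a" using before_trans[OF d] by blast
      then have "(a, b + r b) \<in> invs xs" using ab by (auto simp: invs_before)
      then show ?thesis using inv_iff by simp
    qed
  next
    fix a assume "r a \<noteq> 0"
    then have "(a, a + r a) \<in> invs xs" using inv_iff by simp
    then show "0 < a" "a + r a \<le> N" using Tam_invs_range[OF xs] by auto
  qed
  ultimately show ?thesis by blast
qed

function blk :: "(nat \<Rightarrow> nat) \<Rightarrow> nat \<Rightarrow> nat \<Rightarrow> nat list" where
  "blk r lo 0 = []"
| "blk r lo (Suc l) = blk r (Suc lo) (min (r lo) l) @ [lo] @ blk r (Suc lo + min (r lo) l) (l - min (r lo) l)"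
  by pat_completeness auto
termination by (relation "measure (\<lambda>(r,lo,l). l)") auto

lemma set_blk: "set (blk r lo l) = {lo..<lo+l}"
proof (induction r lo l rule: blk.induct)
  case (1 r lo) then show ?case by simp
next
  case (2 r lo l)
  then show ?case by (auto simp: min_def split: if_splits)
qed

lemma distinct_blk: "distinct (blk r lo l)"
proof (induction r lo l rule: blk.induct)
  case (1 r lo) then show ?case by simp
next
  case (2 r lo l)
  then show ?case by (auto simp: set_blk min_def split: if_splits)
qed

lemma invs_blk:
  "lam r \<Longrightarrow> (\<forall>a. lo \<le> a \<longrightarrow> a < lo + l \<longrightarrow> a + r a < lo + l) \<Longrightarrow>
    invs (blk r lo l) = {(a,b). lo \<le> a \<and> a < lo + l \<and> a < b \<and> b \<le> a + r a}"
proof (induction r lo l rule: blk.induct)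
  case (1 r lo)
  then show ?case by (auto simp: invs_def)
next
  case (2 r lo l)
  define k where "k = min (r lo) l"
  have k: "k = r lo" using 2(4)[rule_format, of lo] by (auto simp: k_def)
  have kl: "k \<le> l" by (simp add: k_def)
  have IH1: "invs (blk r (Suc lo) k) = {(a,b). Suc lo \<le> a \<and> a < Suc lo + k \<and> a < b \<and> b \<le> a + r a}"
    unfolding k_def
  proof (rule 2(1)[OF 2(3)], intro allI impI)
    fix a assume a: "Suc lo \<le> a" "a < Suc lo + min (r lo) l"
    then have "a \<le> lo + r lo" using k k_def by simp
    then have "a + r a \<le> lo + r lo" using lamD[OF 2(3), of lo a] a by simp
    then show "a + r a < Suc lo + min (r lo) l" using k k_def by simp
  qed
  have IH2: "invs (blk r (Suc lo + k) (l - k)) = {(a,b). Suc lo + k \<le> a \<and> a < lo + Suc l \<and> a < b \<and> b \<le> a + r a}"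
  proof -
    have "invs (blk r (Suc lo + k) (l - k)) = {(a,b). Suc lo + k \<le> a \<and> a < Suc lo + k + (l - k) \<and> a < b \<and> b \<le> a + r a}"
      unfolding k_def
    proof (rule 2(2)[OF 2(3)], intro allI impI)
      fix a assume a: "Suc lo + min (r lo) l \<le> a" "a < Suc lo + min (r lo) l + (l - min (r lo) l)"
      then show "a + r a < Suc lo + min (r lo) l + (l - min (r lo) l)"
        using 2(4)[rule_format, of a] by (auto simp: min_def)
    qed
    moreover have "Suc lo + k + (l - k) = lo + Suc l" using kl by simp
    ultimately show ?thesis by simp
  qed
  have e: "blk r lo (Suc l) = blk r (Suc lo) k @ [lo] @ blk r (Suc lo + k) (l - k)"
    by (simp add: k_def)
  have cross: "invs (blk r lo (Suc l)) = invs (blk r (Suc lo) k) \<union> invs (blk r (Suc lo + k) (l - k))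
      \<union> {(a,b). a = lo \<and> lo < b \<and> b \<le> lo + k}"
  proof -
    have s1: "set (blk r (Suc lo) k) = {Suc lo..<Suc lo + k}" by (rule set_blk)
    have s2: "set (blk r (Suc lo + k) (l - k)) = {Suc lo + k..<Suc lo + k + (l - k)}" by (rule set_blk)
    show ?thesis unfolding e invs_append set_append using s1 s2 by auto
  qed
  have U: "invs (blk r lo (Suc l)) = {(a,b). Suc lo \<le> a \<and> a < Suc lo + k \<and> a < b \<and> b \<le> a + r a}
     \<union> {(a,b). Suc lo + k \<le> a \<and> a < lo + Suc l \<and> a < b \<and> b \<le> a + r a}
     \<union> {(a,b). a = lo \<and> lo < b \<and> b \<le> lo + k}"
    by (simp only: cross IH1 IH2)
  show ?case unfolding U using k kl by (auto; metis le_antisym not_less_eq_eq)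
qed

lemma R_interval: "(a,b) \<in> R r \<Longrightarrow> a < c \<Longrightarrow> c < b \<Longrightarrow> (a,c) \<in> R r"
  by (auto simp: R_def)

lemma Brk_to_Tam:
  assumes r: "r \<in> Brk N"
  shows "\<exists>xs\<in>Tam N. invs xs = R r"
proof -
  define xs where "xs = blk r 1 N"
  have l: "lam r" using r by (simp add: Brk_def)
  have bc: "\<forall>a. 1 \<le> a \<longrightarrow> a < 1 + N \<longrightarrow> a + r a < 1 + N"
  proof (intro allI impI)
    fix a assume "1 \<le> a" "a < 1 + N"
    then show "a + r a < 1 + N" using BrkD(3)[OF r, of a] by (cases "r a = 0") auto
  qed
  have iv1: "invs xs = {(a, b). 1 \<le> a \<and> a < 1 + N \<and> a < b \<and> b \<le> a + r a}"
    unfolding xs_def by (rule invs_blk[OF l bc])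
  have iv2: "{(a, b). 1 \<le> a \<and> a < 1 + N \<and> a < b \<and> b \<le> a + r a} = R r"
  proof (auto simp: R_def)
    fix a b assume "0 < a" "a < b" "b \<le> a + r a"
    then show "a < Suc N" using BrkD(3)[OF r, of a] by auto
  qed
  have iv: "invs xs = R r" using iv1 iv2 by simp
  have d: "distinct xs" and s: "set xs = {1..N}" unfolding xs_def
    using distinct_blk set_blk by auto
  have "avoids312 xs"
    by (rule interval_avoids312[OF d]) (use iv R_interval in auto)
  then have "xs \<in> Tam N" using d s by (simp add: Tam_def perms_def)
  then show ?thesis using iv by blast
qed

lemma R_mono_iff:
  assumes "r \<in> Brk N" "s \<in> Brk N"
  shows "R r \<subseteq> R s \<longleftrightarrow> r \<le> s"
proof
  assume h: "R r \<subseteq> R s"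
  show "r \<le> s"
  proof (rule le_funI)
    fix a show "r a \<le> s a"
    proof (cases "r a = 0")
      case False
      then have "(a, a + r a) \<in> R r" using BrkD(2)[OF assms(1)] by (auto simp: R_def)
      then have "(a, a + r a) \<in> R s" using h by blast
      then show ?thesis by (simp add: R_def)
    qed simp
  qed
next
  assume "r \<le> s"
  then show "R r \<subseteq> R s" by (auto simp: R_def le_fun_def intro: order_trans add_left_mono)
qed


definition lef :: "(nat \<Rightarrow> nat) \<Rightarrow> (nat \<Rightarrow> nat) \<Rightarrow> bool" where
  "lef r s \<longleftrightarrow> (\<forall>a. r a \<le> s a)"

lemma lefI: "(\<And>a. r a \<le> s a) \<Longrightarrow> lef r s" by (simp add: lef_def)
lemma lefD: "lef r s \<Longrightarrow> r a \<le> s a" by (simp add: lef_def)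
lemma lef_antisym: "lef r s \<Longrightarrow> lef s r \<Longrightarrow> r = s"
  unfolding lef_def by (intro ext) (metis le_antisym)

lemma R_mono_lef: "r \<in> Brk N \<Longrightarrow> s \<in> Brk N \<Longrightarrow> R r \<subseteq> R s \<longleftrightarrow> lef r s"
  using R_mono_iff by (simp add: lef_def le_fun_def)

definition b0 :: "(nat \<Rightarrow> nat) \<Rightarrow> nat \<Rightarrow> nat" where
  "b0 x a = (LEAST b. a < b \<and> b + x b = a + x a)"

definition tt :: "(nat \<Rightarrow> nat) \<Rightarrow> nat \<Rightarrow> nat" where
  "tt x a = b0 x a - a - 1"

definition P :: "(nat \<Rightarrow> nat) \<Rightarrow> nat \<Rightarrow> nat" where
  "P x = (\<lambda>a. if x a = 0 then 0 else tt x a)"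

lemma lam_end0: "lam x \<Longrightarrow> x (a + x a) = 0"
proof (cases "x a = 0")
  case True then show ?thesis by simp
next
  case False
  assume l: "lam x"
  have "a + x a + x (a + x a) \<le> a + x a" using lamD[OF l, of a "a + x a"] False by simp
  then show ?thesis by simp
qed

lemma b0_props:
  assumes l: "lam x" and pos: "0 < x a"
  shows "a < b0 x a" "b0 x a \<le> a + x a" "b0 x a + x (b0 x a) = a + x a"
proof -
  have w: "a < a + x a \<and> (a + x a) + x (a + x a) = a + x a" using lam_end0[OF l, of a] pos by simp
  have P: "a < b0 x a \<and> b0 x a + x (b0 x a) = a + x a"
    unfolding b0_def by (rule LeastI[of _ "a + x a"], rule w)
  then show "a < b0 x a" "b0 x a + x (b0 x a) = a + x a" by auto
  show "b0 x a \<le> a + x a" unfolding b0_def by (rule Least_le, rule w)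
qed

lemma b0_inner:
  assumes l: "lam x" and pos: "0 < x a" and b: "a < b" "b < b0 x a"
  shows "b + x b < b0 x a"
proof (rule ccontr)
  assume "\<not> b + x b < b0 x a"
  then have ge: "b0 x a \<le> b + x b" by simp
  have bb: "b0 x a \<le> a + x a" "b0 x a + x (b0 x a) = a + x a" using b0_props[OF l pos] by auto
  have "b + x b \<le> a + x a" using lamD[OF l, of a b] b bb by simp
  moreover have "b0 x a + x (b0 x a) \<le> b + x b" using lamD[OF l, of b "b0 x a"] b ge by simp
  ultimately have "b + x b = a + x a" using bb by simp
  then have "b0 x a \<le> b" unfolding b0_def using b by (intro Least_le) simp
  then show False using b by simp
qed

lemma tt_less: "lam x \<Longrightarrow> 0 < x a \<Longrightarrow> tt x a < x a"
  using b0_props[of x a] unfolding tt_def by auto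

lemma tt_eq: "lam x \<Longrightarrow> 0 < x a \<Longrightarrow> b0 x a = a + tt x a + 1"
  using b0_props[of x a] unfolding tt_def by auto

lemma step_Brk:
  assumes x: "x \<in> Brk N" and pos: "0 < x a"
  shows "x(a := tt x a) \<in> Brk N"
proof -
  have l: "lam x" using x by (simp add: Brk_def)
  define y where "y = x(a := tt x a)"
  have ya: "y a = tt x a" and yo: "\<And>b. b \<noteq> a \<Longrightarrow> y b = x b" by (auto simp: y_def)
  have t: "tt x a < x a" by (rule tt_less[OF l pos])
  have e: "b0 x a = a + tt x a + 1" by (rule tt_eq[OF l pos])
  have "lam y" unfolding lam_def
  proof (intro allI impI)
    fix p q assume pq: "p < q" "q \<le> p + y p"
    show "q + y q \<le> p + y p"
    proof (cases "p = a")
      case True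
      then have qa: "q \<noteq> a" using pq by simp
      have "q < b0 x a" using pq e True ya by simp
      then have "q + x q < b0 x a" using b0_inner[OF l pos, of q] pq True by blast
      then show ?thesis using True e ya yo[OF qa] by simp
    next
      case False
      note pa = False
      show ?thesis
      proof (cases "q = a")
        case True
        then have "a \<le> p + x p" using pq yo[OF pa] by simp
        then have "a + x a \<le> p + x p" using lamD[OF l, of p a] pq True by blast
        then show ?thesis using True t ya yo[OF pa] by simp
      next
        case False
        have "q \<le> p + x p" using pq yo[OF pa] by simp
        then have "q + x q \<le> p + x p" using lamD[OF l, of p q] pq by blast
        then show ?thesis using yo[OF pa] yo[OF False] by simp
      qed
    qed
  qed
  moreover have "\<forall>b. y b \<noteq> 0 \<longrightarrow> 0 < b \<and> b + y b \<le> N"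
  proof (intro allI impI)
    fix b assume yb: "y b \<noteq> 0"
    have le: "y b \<le> x b" using t ya yo by (cases "b = a") auto
    then have "x b \<noteq> 0" using yb by simp
    then have "0 < b" "b + x b \<le> N" using BrkD(2,3)[OF x, of b] by blast+
    then show "0 < b \<and> b + y b \<le> N" using le by simp
  qed
  ultimately show ?thesis unfolding Brk_def y_def by blast
qed

lemma cover_step:
  assumes x: "x \<in> Brk N" and pos: "0 < x a"
  shows "covers (Brk N) lef (x(a := tt x a)) x"
proof -
  have l: "lam x" using x by (simp add: Brk_def)
  define y where "y = x(a := tt x a)"
  have ya: "y a = tt x a" and yo: "\<And>b. b \<noteq> a \<Longrightarrow> y b = x b" by (auto simp: y_def)
  have t: "tt x a < x a" by (rule tt_less[OF l pos])
  have e: "b0 x a = a + tt x a + 1" by (rule tt_eq[OF l pos])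
  have yle: "lef y x"
  proof (rule lefI)
    fix b show "y b \<le> x b" using t ya yo by (cases "b = a") auto
  qed
  have yne: "y \<noteq> x"
  proof
    assume "y = x"
    then have "y a = x a" by simp
    then show False using t ya by simp
  qed
  have no: "\<not> (\<exists>z\<in>Brk N. lef y z \<and> lef z x \<and> z \<noteq> y \<and> z \<noteq> x)"
  proof
    assume "\<exists>z\<in>Brk N. lef y z \<and> lef z x \<and> z \<noteq> y \<and> z \<noteq> x"
    then obtain z where z: "z \<in> Brk N" "lef y z" "lef z x" "z \<noteq> y" "z \<noteq> x" by auto
    have off: "z b = x b" if "b \<noteq> a" for b
    proof -
      have "y b \<le> z b" "z b \<le> x b" using z(2,3) lefD by blast+
      then show ?thesis using yo[OF that] by simp
    qed
    have "z a \<noteq> tt x a"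
    proof
      assume "z a = tt x a"
      show False
      proof (rule notE[OF z(4)], rule ext)
        fix b show "z b = y b" using off ya yo \<open>z a = tt x a\<close> by (cases "b = a") auto
      qed
    qed
    moreover have "z a \<noteq> x a"
    proof
      assume "z a = x a"
      show False
      proof (rule notE[OF z(5)], rule ext)
        fix b show "z b = x b" using off \<open>z a = x a\<close> by (cases "b = a") auto
      qed
    qed
    moreover have "y a \<le> z a" "z a \<le> x a" using z(2,3) lefD by blast+
    ultimately have za: "tt x a < z a" "z a < x a" using ya by auto
    define c where "c = b0 x a"
    have c: "a < c" "c + x c = a + x a" using b0_props[OF l pos] by (auto simp: c_def)
    have "c \<le> a + z a" using e za by (simp add: c_def)
    moreover have "lam z" using z(1) by (simp add: Brk_def)
    ultimately have "c + z c \<le> a + z a" using lamD[of z a c] c by blast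
    moreover have "z c = x c" using off c by simp
    ultimately show False using c za by simp
  qed
  have yB: "y \<in> Brk N" unfolding y_def by (rule step_Brk[OF x pos])
  have "covers (Brk N) lef y x" unfolding covers_def using yB x yle yne no by blast
  then show ?thesis by (simp add: y_def)
qed

lemma cover_cases:
  assumes c: "covers (Brk N) lef y x"
  shows "\<exists>a. 0 < x a \<and> y = x(a := tt x a)"
proof -
  have y: "y \<in> Brk N" and x: "x \<in> Brk N" and yx: "lef y x" "y \<noteq> x"
    and no: "\<not> (\<exists>z\<in>Brk N. lef y z \<and> lef z x \<and> z \<noteq> y \<and> z \<noteq> x)"
    using c unfolding covers_def by auto
  have lx: "lam x" and ly: "lam y" using x y by (auto simp: Brk_def)
  define D where "D = {a. y a < x a}"
  have Dfin: "finite D"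
  proof (rule finite_subset[of _ "{..N}"])
    show "D \<subseteq> {..N}"
    proof
      fix a assume "a \<in> D"
      then have "x a \<noteq> 0" by (simp add: D_def)
      then show "a \<in> {..N}" using BrkD(3)[OF x, of a] by simp
    qed
  qed simp
  have Dne: "D \<noteq> {}"
  proof
    assume "D = {}"
    then have "\<forall>a. x a \<le> y a" by (auto simp: D_def not_less)
    then have "lef x y" by (simp add: lef_def)
    then have "y = x" using yx(1) by (rule lef_antisym[rotated])
    then show False using yx by simp
  qed
  define a where "a = Max D"
  have aD: "a \<in> D" and amax: "\<And>b. b \<in> D \<Longrightarrow> b \<le> a" using Dfin Dne unfolding a_def by auto
  have ya: "y a < x a" using aD by (simp add: D_def)
  then have pos: "0 < x a" by simp
  have above: "y b = x b" if "a < b" for b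
  proof -
    have "b \<notin> D" using amax that by fastforce
    then have "x b \<le> y b" by (simp add: D_def not_less)
    moreover have "y b \<le> x b" using yx(1) lefD by blast
    ultimately show ?thesis by simp
  qed
  let ?c = "b0 x a"
  have c: "a < ?c" "?c + x ?c = a + x a" using b0_props[OF lx pos] by auto
  have e: "?c = a + tt x a + 1" by (rule tt_eq[OF lx pos])
  have yle: "y a \<le> tt x a"
  proof (rule ccontr)
    assume "\<not> y a \<le> tt x a"
    then have "?c \<le> a + y a" using e by simp
    then have "?c + y ?c \<le> a + y a" using lamD[OF ly, of a ?c] c by simp
    moreover have "y ?c = x ?c" using above c by simp
    ultimately show False using c ya by simp
  qed
  let ?w = "x(a := tt x a)"
  have wB: "?w \<in> Brk N" by (rule step_Brk[OF x pos])
  have yw: "lef y ?w" using yx(1) yle by (auto simp: lef_def)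
  have wx: "lef ?w x" using tt_less[OF lx pos] by (auto simp: lef_def)
  have wnx: "?w \<noteq> x"
  proof
    assume "?w = x"
    then have "?w a = x a" by simp
    then show False using tt_less[OF lx pos] by simp
  qed
  have "y = ?w" using no wB yw wx wnx by blast
  then show ?thesis using pos by blast
qed

lemma covers_set: "x \<in> Brk N \<Longrightarrow> {y. covers (Brk N) lef y x} = {x(a := tt x a) | a. 0 < x a}"
  using cover_step cover_cases by blast

lemma P_Brk:
  assumes x: "x \<in> Brk N"
  shows "P x \<in> Brk N"
proof -
  have l: "lam x" using x by (simp add: Brk_def)
  have Ple: "P x b \<le> x b" for b using tt_less[OF l, of b] by (cases "x b = 0") (auto simp: P_def)
  have "lam (P x)" unfolding lam_def
  proof (intro allI impI)
    fix a b assume ab: "a < b" "b \<le> a + P x a"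
    then have pos: "0 < x a" and Pa: "P x a = tt x a" by (auto simp: P_def split: if_splits)
    have "b < b0 x a" using ab Pa tt_eq[OF l pos] by simp
    then have "b + x b < b0 x a" using b0_inner[OF l pos] ab by simp
    then show "b + P x b \<le> a + P x a" using Ple[of b] Pa tt_eq[OF l pos] by simp
  qed
  moreover have "\<forall>b. P x b \<noteq> 0 \<longrightarrow> 0 < b \<and> b + P x b \<le> N"
  proof (intro allI impI)
    fix b assume "P x b \<noteq> 0"
    then have "x b \<noteq> 0" by (auto simp: P_def split: if_splits)
    then show "0 < b \<and> b + P x b \<le> N" using BrkD(2,3)[OF x, of b] Ple[of b] by auto
  qed
  ultimately show ?thesis by (simp add: Brk_def)
qed

lemma is_glb_unique:
  shows "is_glb L lef S m \<Longrightarrow> is_glb L lef S m' \<Longrightarrow> m = m'"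
  unfolding is_glb_def by (auto intro: lef_antisym)

lemma P_glb:
  assumes x: "x \<in> Brk N"
  shows "is_glb (Brk N) lef ({y. covers (Brk N) lef y x} \<union> {x}) (P x)"
proof -
  have l: "lam x" using x by (simp add: Brk_def)
  have Ple: "lef (P x) x"
  proof (rule lefI)
    fix b show "P x b \<le> x b" using tt_less[OF l, of b] by (cases "x b = 0") (auto simp: P_def)
  qed
  show ?thesis unfolding is_glb_def covers_set[OF x]
  proof (intro conjI ballI impI)
    show "P x \<in> Brk N" by (rule P_Brk[OF x])
  next
    fix s assume "s \<in> {x(a := tt x a) |a. 0 < x a} \<union> {x}"
    then show "lef (P x) s"
    proof
      assume "s \<in> {x(a := tt x a) |a. 0 < x a}"
      then obtain a where "0 < x a" "s = x(a := tt x a)" by blast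
      then show "lef (P x) s" using Ple by (auto simp: lef_def P_def)
    qed (use Ple in simp)
  next
    fix z assume z: "z \<in> Brk N" "\<forall>s\<in>{x(a := tt x a) |a. 0 < x a} \<union> {x}. lef z s"
    show "lef z (P x)"
    proof (rule lefI)
      fix a
      show "z a \<le> P x a"
      proof (cases "x a = 0")
        case True
        have "lef z x" using z(2) by blast
        then have "z a \<le> x a" using lefD by blast
        then show ?thesis using True by (simp add: P_def)
      next
        case False
        then have "lef z (x(a := tt x a))" using z(2) by blast
        then have "z a \<le> tt x a" using lefD[of z _ a] by fastforce
        then show ?thesis using False by (simp add: P_def)
      qed
    qed
  qed
qed

lemma Pop_Brk:
  assumes x: "x \<in> Brk N"
  shows "Pop (Brk N) lef x = P x"
  unfolding Pop_def meet_def
proof (rule the_equality)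
  show "is_glb (Brk N) lef ({y. covers (Brk N) lef y x} \<union> {x}) (P x)" by (rule P_glb[OF x])
  fix m assume "is_glb (Brk N) lef ({y. covers (Brk N) lef y x} \<union> {x}) m"
  then show "m = P x" using is_glb_unique P_glb[OF x] by blast
qed


definition up :: "(nat \<Rightarrow> nat) \<Rightarrow> nat \<Rightarrow> nat \<Rightarrow> nat" where
  "up z a = z(a := z a + 1 + z (a + z a + 1))"

definition EE :: "nat \<Rightarrow> (nat \<Rightarrow> nat) \<Rightarrow> nat set" where
  "EE N z = {a. 0 < a \<and> a + z a < N \<and> (\<forall>e<a. a \<le> e + z e \<longrightarrow> a + z a < e + z e)}"

definition Good :: "nat \<Rightarrow> (nat \<Rightarrow> nat) \<Rightarrow> bool" where
  "Good N z \<longleftrightarrow> z \<in> Brk N \<and> (\<forall>a. z a \<noteq> 0 \<longrightarrow> a + z a < N) \<and>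
     (\<forall>a b. a < b \<longrightarrow> b \<le> a + z a \<longrightarrow> b + z b = a + z a \<longrightarrow> z b = 0)"

definition nz :: "(nat \<Rightarrow> nat) \<Rightarrow> nat" where
  "nz z = card {a. z a \<noteq> 0}"

lemma up_props:
  assumes z: "z \<in> Brk N" and a: "a \<in> EE N z"
  shows "up z a \<in> Brk N" "0 < up z a a" "(up z a)(a := tt (up z a) a) = z"
proof -
  have l: "lam z" using z by (simp add: Brk_def)
  define c where "c = a + z a + 1"
  define x where "x = up z a"
  have xa: "x a = z a + 1 + z c" and xo: "\<And>b. b \<noteq> a \<Longrightarrow> x b = z b"
    by (auto simp: x_def up_def c_def)
  have a0: "0 < a" and aN: "a + z a < N" and ae: "\<And>e. e < a \<Longrightarrow> a \<le> e + z e \<Longrightarrow> a + z a < e + z e"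
    using a by (auto simp: EE_def)
  have ca: "c \<noteq> a" "a < c" by (auto simp: c_def)
  have cN: "c + z c \<le> N"
  proof (cases "z c = 0")
    case True then show ?thesis using aN by (simp add: c_def)
  next
    case False then show ?thesis using BrkD(3)[OF z, of c] by simp
  qed
  have xa': "a + x a = c + z c" using xa by (simp add: c_def)
  have "lam x" unfolding lam_def
  proof (intro allI impI)
    fix p q assume pq: "p < q" "q \<le> p + x p"
    show "q + x q \<le> p + x p"
    proof (cases "p = a")
      case True
      then have qa: "q \<noteq> a" using pq by simp
      have qle: "q \<le> c + z c" using pq True xa' by simp
      have "q + z q \<le> c + z c"
      proof (cases "q < c")
        case True
        then have "q \<le> a + z a" by (simp add: c_def)
        then have "q + z q \<le> a + z a" using lamD[OF l, of a q] pq \<open>p = a\<close> by blast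
        then show ?thesis by (simp add: c_def)
      next
        case False
        show ?thesis
        proof (cases "q = c")
          case True then show ?thesis by simp
        next
          case False
          then have "c < q" using \<open>\<not> q < c\<close> by simp
          then show ?thesis using lamD[OF l, of c q] qle by blast
        qed
      qed
      then show ?thesis using True xa' xo[OF qa] by simp
    next
      case False
      note pa = False
      show ?thesis
      proof (cases "q = a")
        case True
        then have "a \<le> p + z p" "p < a" using pq xo[OF pa] by auto
        then have "a + z a < p + z p" using ae by blast
        then have "c \<le> p + z p" by (simp add: c_def)
        moreover have "p < c" using \<open>p < a\<close> ca by simp
        ultimately have "c + z c \<le> p + z p" using lamD[OF l, of p c] by blast
        then show ?thesis using True xa' xo[OF pa] by simp
      next
        case False
        have "q \<le> p + z p" using pq xo[OF pa] by simp
        then have "q + z q \<le> p + z p" using lamD[OF l, of p q] pq by blast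
        then show ?thesis using xo[OF pa] xo[OF False] by simp
      qed
    qed
  qed
  moreover have "\<forall>b. x b \<noteq> 0 \<longrightarrow> 0 < b \<and> b + x b \<le> N"
  proof (intro allI impI)
    fix b assume xb: "x b \<noteq> 0"
    show "0 < b \<and> b + x b \<le> N"
    proof (cases "b = a")
      case True then show ?thesis using a0 xa' cN by simp
    next
      case False
      then have "z b \<noteq> 0" using xb xo by simp
      then show ?thesis using BrkD(2,3)[OF z, of b] xo[OF False] by simp
    qed
  qed
  ultimately have xB: "x \<in> Brk N" by (simp add: Brk_def)
  then show "up z a \<in> Brk N" by (simp add: x_def)
  have xpos: "0 < x a" using xa by simp
  then show "0 < up z a a" by (simp add: x_def)
  have lx: "lam x" using xB by (simp add: Brk_def)
  have "b0 x a = c"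
    unfolding b0_def
  proof (rule Least_equality)
    show "a < c \<and> c + x c = a + x a" using ca xa' xo[OF ca(1)] by simp
  next
    fix b assume b: "a < b \<and> b + x b = a + x a"
    show "c \<le> b"
    proof (rule ccontr)
      assume "\<not> c \<le> b"
      then have "b \<le> a + z a" by (simp add: c_def)
      have ba: "b \<noteq> a" using b by simp
      have "b + z b \<le> a + z a" using lamD[OF l, of a b] b \<open>b \<le> a + z a\<close> by blast
      then show False using b xa' xo[OF ba] by (simp add: c_def)
    qed
  qed
  then have "tt x a = z a" by (simp add: tt_def c_def)
  then have "x(a := tt x a) = z" using xo by (intro ext) simp
  then show "(up z a)(a := tt (up z a) a) = z" by (simp add: x_def)
qed

lemma upcovers_eq:
  assumes z: "z \<in> Brk N"
  shows "upcovers (Brk N) lef z = up z ` EE N z"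
proof
  show "upcovers (Brk N) lef z \<subseteq> up z ` EE N z"
  proof
    fix x assume "x \<in> upcovers (Brk N) lef z"
    then have cv: "covers (Brk N) lef z x" by (simp add: upcovers_def)
    then have x: "x \<in> Brk N" by (simp add: covers_def)
    have lx: "lam x" using x by (simp add: Brk_def)
    obtain a where pos: "0 < x a" and ze: "z = x(a := tt x a)" using cover_cases[OF cv] by blast
    have zo: "\<And>b. b \<noteq> a \<Longrightarrow> z b = x b" and za: "z a = tt x a" using ze by auto
    have t: "tt x a < x a" by (rule tt_less[OF lx pos])
    have e: "b0 x a = a + tt x a + 1" by (rule tt_eq[OF lx pos])
    have bp: "a < b0 x a" "b0 x a \<le> a + x a" "b0 x a + x (b0 x a) = a + x a" by (rule b0_props[OF lx pos])+
    define c where "c = a + z a + 1"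
    have cb: "c = b0 x a" using e za by (simp add: c_def)
    have ca: "c \<noteq> a" by (simp add: c_def)
    have xa: "x a = z a + 1 + z c"
      using bp(3) zo[OF ca] cb by (simp add: c_def)
    have xup: "x = up z a"
      unfolding up_def
    proof (rule ext)
      fix b show "x b = (z(a := z a + 1 + z (a + z a + 1))) b"
        using xa zo by (cases "b = a") (auto simp: c_def)
    qed
    have "a \<in> EE N z"
      unfolding EE_def
    proof (intro CollectI conjI allI impI)
      show "0 < a" using BrkD(2)[OF x, of a] pos by simp
      show "a + z a < N" using BrkD(3)[OF x, of a] pos bp e za by simp
    next
      fix e assume e: "e < a" "a \<le> e + z e"
      then have ea: "e \<noteq> a" by simp
      then have "a \<le> e + x e" using e zo by simp
      then have "a + x a \<le> e + x e" using lamD[OF lx, of e a] e by blast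
      then show "a + z a < e + z e" using t za zo[OF ea] by simp
    qed
    then show "x \<in> up z ` EE N z" using xup by blast
  qed
next
  show "up z ` EE N z \<subseteq> upcovers (Brk N) lef z"
  proof
    fix x assume "x \<in> up z ` EE N z"
    then obtain a where a: "a \<in> EE N z" and xe: "x = up z a" by blast
    have "covers (Brk N) lef ((up z a)(a := tt (up z a) a)) (up z a)"
      using cover_step up_props[OF z a] by blast
    then have "covers (Brk N) lef z x" using up_props(3)[OF z a] xe by simp
    then show "x \<in> upcovers (Brk N) lef z" by (simp add: upcovers_def)
  qed
qed

lemma up_inj: "inj_on (up z) A"
proof (rule inj_onI)
  fix a1 a2 assume eq: "up z a1 = up z a2"
  show "a1 = a2"
  proof (rule ccontr)
    assume ne: "a1 \<noteq> a2"
    have "up z a1 a1 = up z a2 a1" using eq by simp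
    then show False using ne by (simp add: up_def)
  qed
qed

lemma card_upcovers: "z \<in> Brk N \<Longrightarrow> card (upcovers (Brk N) lef z) = card (EE N z)"
  using upcovers_eq card_image[OF up_inj] by simp

lemma nz_finite:
  assumes z: "z \<in> Brk N" shows "finite {a. z a \<noteq> 0}"
proof (rule finite_subset[of _ "{..N}"])
  show "{a. z a \<noteq> 0} \<subseteq> {..N}"
  proof
    fix a assume "a \<in> {a. z a \<noteq> 0}"
    then show "a \<in> {..N}" using BrkD(3)[OF z, of a] by simp
  qed
qed simp

lemma card_EE_good:
  assumes g: "Good N z"
  shows "card (EE N z) = N - 1 - nz z"
proof -
  have z: "z \<in> Brk N" using conjunct1[OF g[unfolded Good_def]] .
  have gN: "\<And>a. z a \<noteq> 0 \<Longrightarrow> a + z a < N" using conjunct1[OF conjunct2[OF g[unfolded Good_def]]] by blast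
  have lcl: "\<And>a b. a < b \<Longrightarrow> b \<le> a + z a \<Longrightarrow> b + z b = a + z a \<Longrightarrow> z b = 0"
  proof -
    fix a b assume "a < b" "b \<le> a + z a" "b + z b = a + z a"
    moreover have "\<forall>a b. a < b \<longrightarrow> b \<le> a + z a \<longrightarrow> b + z b = a + z a \<longrightarrow> z b = 0"
      using conjunct2[OF conjunct2[OF g[unfolded Good_def]]] .
    ultimately show "z b = 0" by blast
  qed
  have l: "lam z" using z by (simp add: Brk_def)
  define NZ where "NZ = {a. z a \<noteq> 0}"
  define LC where "LC = (\<lambda>e. e + z e) ` NZ"
  have fNZ: "finite NZ" unfolding NZ_def by (rule nz_finite[OF z])
  have inj: "inj_on (\<lambda>e. e + z e) NZ"
  proof (rule inj_onI)
    fix e e' assume e: "e \<in> NZ" "e' \<in> NZ" "e + z e = e' + z e'"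
    show "e = e'"
    proof (rule ccontr)
      assume "e \<noteq> e'"
      then consider "e < e'" | "e' < e" by linarith
      then show False
      proof cases
        case 1
        have "e' \<le> e + z e" using e(3) by simp
        from lcl[OF 1 this e(3)[symmetric]] have "z e' = 0" .
        then show False using e by (simp add: NZ_def)
      next
        case 2
        have "e \<le> e' + z e'" using e(3) by simp
        from lcl[OF 2 this e(3)] have "z e = 0" .
        then show False using e by (simp add: NZ_def)
      qed
    qed
  qed
  have LCsub: "LC \<subseteq> {1..<N}"
  proof
    fix d assume "d \<in> LC"
    then obtain e where e: "e \<in> NZ" "d = e + z e" unfolding LC_def by blast
    then have "0 < e" "e + z e < N" using BrkD(2)[OF z, of e] gN[of e] by (auto simp: NZ_def)
    then show "d \<in> {1..<N}" using e by simp
  qed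
  have EEeq: "EE N z = {1..<N} - LC"
  proof
    show "EE N z \<subseteq> {1..<N} - LC"
    proof
      fix a assume a: "a \<in> EE N z"
      then have a0: "0 < a" and aN: "a + z a < N" and ae: "\<And>e. e < a \<Longrightarrow> a \<le> e + z e \<Longrightarrow> a + z a < e + z e"
        by (auto simp: EE_def)
      have "a \<notin> LC"
      proof
        assume "a \<in> LC"
        then obtain e where e: "z e \<noteq> 0" "a = e + z e" unfolding LC_def NZ_def by blast
        then have "e < a" "a \<le> e + z e" by auto
        then have "a + z a < e + z e" by (rule ae)
        then show False using e by simp
      qed
      then show "a \<in> {1..<N} - LC" using a0 aN by simp
    qed
  next
    show "{1..<N} - LC \<subseteq> EE N z"
    proof
      fix a assume a: "a \<in> {1..<N} - LC"
      show "a \<in> EE N z"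
        unfolding EE_def
      proof (intro CollectI conjI allI impI)
        show "0 < a" using a by simp
        show "a + z a < N" using a gN[of a] by (cases "z a = 0") auto
      next
        fix e assume e: "e < a" "a \<le> e + z e"
        have le: "a + z a \<le> e + z e" using lamD[OF l, of e a] e by blast
        show "a + z a < e + z e"
        proof (rule ccontr)
          assume "\<not> a + z a < e + z e"
          then have eq: "a + z a = e + z e" using le by simp
          from lcl[OF e(1) e(2) eq] have "z a = 0" .
          then have "a = e + z e" using eq by simp
          moreover have "z e \<noteq> 0" using e \<open>z a = 0\<close> eq by simp
          ultimately have "a \<in> LC" unfolding LC_def NZ_def by blast
          then show False using a by simp
        qed
      qed
    qed
  qed
  have "card (EE N z) = card {1..<N} - card LC"
    unfolding EEeq by (rule card_Diff_subset[OF finite_subset[OF LCsub finite_atLeastLessThan] LCsub])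
  also have "card LC = card NZ" unfolding LC_def by (rule card_image[OF inj])
  finally show ?thesis by (simp add: nz_def NZ_def)
qed


lemma GoodI:
  assumes "z \<in> Brk N" "\<And>a. z a \<noteq> 0 \<Longrightarrow> a + z a < N"
    "\<And>a b. a < b \<Longrightarrow> b \<le> a + z a \<Longrightarrow> b + z b = a + z a \<Longrightarrow> z b = 0"
  shows "Good N z"
  unfolding Good_def using assms by blast

lemma GoodD:
  assumes g: "Good N z"
  shows "z \<in> Brk N" "\<And>a. z a \<noteq> 0 \<Longrightarrow> a + z a < N"
    "\<And>a b. a < b \<Longrightarrow> b \<le> a + z a \<Longrightarrow> b + z b = a + z a \<Longrightarrow> z b = 0"
proof -
  show "z \<in> Brk N" using conjunct1[OF g[unfolded Good_def]] .
  show "\<And>a. z a \<noteq> 0 \<Longrightarrow> a + z a < N" using conjunct1[OF conjunct2[OF g[unfolded Good_def]]] by blast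
  fix a b assume "a < b" "b \<le> a + z a" "b + z b = a + z a"
  moreover have "\<forall>a b. a < b \<longrightarrow> b \<le> a + z a \<longrightarrow> b + z b = a + z a \<longrightarrow> z b = 0"
    using conjunct2[OF conjunct2[OF g[unfolded Good_def]]] .
  ultimately show "z b = 0" by blast
qed

lemma P_good:
  assumes x: "x \<in> Brk N"
  shows "Good N (P x)"
proof (rule GoodI)
  have l: "lam x" using x by (simp add: Brk_def)
  show "P x \<in> Brk N" by (rule P_Brk[OF x])
  fix a assume "P x a \<noteq> 0"
  then have pos: "0 < x a" and Pa: "P x a = tt x a" by (auto simp: P_def split: if_splits)
  have "b0 x a \<le> a + x a" using b0_props[OF l pos] by simp
  moreover have "a + x a \<le> N" using BrkD(3)[OF x, of a] pos by simp
  ultimately show "a + P x a < N" using tt_eq[OF l pos] Pa by simp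
next
  have l: "lam x" using x by (simp add: Brk_def)
  fix a b assume ab: "a < b" "b \<le> a + P x a" "b + P x b = a + P x a"
  then have pos: "0 < x a" and Pa: "P x a = tt x a" by (auto simp: P_def split: if_splits)
  have "b < b0 x a" using ab Pa tt_eq[OF l pos] by simp
  then have "b + x b < b0 x a" using b0_inner[OF l pos] ab by blast
  then have "x b \<le> P x b" using ab Pa tt_eq[OF l pos] by simp
  show "P x b = 0"
  proof (cases "x b = 0")
    case True then show ?thesis by (simp add: P_def)
  next
    case False
    then have "P x b = tt x b" by (simp add: P_def)
    moreover have "tt x b < x b" using tt_less[OF l] False by simp
    ultimately show ?thesis using \<open>x b \<le> P x b\<close> by simp
  qed
qed

definition valid :: "(nat \<Rightarrow> nat) \<Rightarrow> nat \<Rightarrow> nat \<Rightarrow> bool" where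
  "valid z a d \<longleftrightarrow> a + z a < d \<and> z d = 0 \<and> (\<forall>e. a + z a < e \<longrightarrow> e < d \<longrightarrow> e + z e < d)"

definition ff :: "(nat \<Rightarrow> nat) \<Rightarrow> nat \<Rightarrow> nat" where
  "ff z a = (LEAST d. valid z a d)"

definition pre :: "(nat \<Rightarrow> nat) \<Rightarrow> nat \<Rightarrow> nat" where
  "pre z = (\<lambda>a. if z a = 0 then 0 else ff z a - a)"

lemma validD:
  assumes "valid z a d"
  shows "a + z a < d" "z d = 0" "\<And>e. a + z a < e \<Longrightarrow> e < d \<Longrightarrow> e + z e < d"
  using assms unfolding valid_def by blast+

lemma validI:
  assumes "a + z a < d" "z d = 0" "\<And>e. a + z a < e \<Longrightarrow> e < d \<Longrightarrow> e + z e < d"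
  shows "valid z a d"
  using assms unfolding valid_def by blast

context
  fixes N z assumes g: "Good N z"
begin

lemma zB: "z \<in> Brk N" by (rule GoodD(1)[OF g])
lemma zl: "lam z" using zB by (simp add: Brk_def)

lemma valid_N: assumes "z a \<noteq> 0" shows "valid z a N"
proof (rule validI)
  show "a + z a < N" by (rule GoodD(2)[OF g assms])
  show "z N = 0"
  proof (rule ccontr)
    assume "z N \<noteq> 0"
    then have "N + z N \<le> N" using BrkD(3)[OF zB, of N] by simp
    then show False using \<open>z N \<noteq> 0\<close> by simp
  qed
  fix e assume "a + z a < e" "e < N"
  show "e + z e < N"
  proof (cases "z e = 0")
    case True then show ?thesis using \<open>e < N\<close> by simp
  next
    case False then show ?thesis by (rule GoodD(2)[OF g])
  qed
qed

lemma ff_valid: assumes "z a \<noteq> 0" shows "valid z a (ff z a)"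
  unfolding ff_def by (rule LeastI[of "valid z a" N, OF valid_N[OF assms]])

lemma ff_le: "valid z a d \<Longrightarrow> ff z a \<le> d"
  unfolding ff_def by (rule Least_le)

lemma ff_N: "z a \<noteq> 0 \<Longrightarrow> ff z a \<le> N"
  by (rule ff_le[OF valid_N])

lemma ff_inner:
  assumes a: "z a \<noteq> 0" and b: "z b \<noteq> 0" "a < b" "b \<le> a + z a"
  shows "ff z b \<le> a + z a"
proof (rule ff_le, rule validI)
  have le: "b + z b \<le> a + z a" using lamD[OF zl, of a b] b by blast
  show "b + z b < a + z a"
  proof (rule ccontr)
    assume "\<not> b + z b < a + z a"
    then have eq: "b + z b = a + z a" using le by simp
    from GoodD(3)[OF g b(2) b(3) eq] have "z b = 0" .
    then show False using b by simp
  qed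
  show "z (a + z a) = 0" by (rule lam_end0[OF zl])
  fix e assume e: "b + z b < e" "e < a + z a"
  then have ea: "a < e" "e \<le> a + z a" using b by auto
  have le2: "e + z e \<le> a + z a" using lamD[OF zl, of a e] ea by blast
  show "e + z e < a + z a"
  proof (rule ccontr)
    assume "\<not> e + z e < a + z a"
    then have eq: "e + z e = a + z a" using le2 by simp
    from GoodD(3)[OF g ea(1) ea(2) eq] have "z e = 0" .
    then show False using eq e by simp
  qed
qed

lemma ff_outer:
  assumes a: "z a \<noteq> 0" and b: "z b \<noteq> 0" "a + z a < b" "b < ff z a"
  shows "ff z b \<le> ff z a"
proof (rule ff_le, rule validI)
  have v: "valid z a (ff z a)" by (rule ff_valid[OF a])
  show "b + z b < ff z a" using validD(3)[OF v, of b] b by blast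
  show "z (ff z a) = 0" using validD(2)[OF v] .
  fix e assume e: "b + z b < e" "e < ff z a"
  then have "a + z a < e" using b by simp
  then show "e + z e < ff z a" using validD(3)[OF v] e by blast
qed

lemma ff_next:
  assumes a: "z a \<noteq> 0" and c: "z (a + z a + 1) \<noteq> 0"
  shows "ff z a \<le> ff z (a + z a + 1)"
proof (rule ff_le, rule validI)
  let ?c = "a + z a + 1"
  have v: "valid z ?c (ff z ?c)" by (rule ff_valid[OF c])
  show "a + z a < ff z ?c" using validD(1)[OF v] by simp
  show "z (ff z ?c) = 0" using validD(2)[OF v] .
  fix e assume e: "a + z a < e" "e < ff z ?c"
  show "e + z e < ff z ?c"
  proof (cases "e = ?c")
    case True then show ?thesis using validD(1)[OF v] by simp
  next
    case False
    then have ec: "?c < e" using e by simp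
    show ?thesis
    proof (cases "e \<le> ?c + z ?c")
      case True
      then have "e + z e \<le> ?c + z ?c" using lamD[OF zl, of ?c e] ec by blast
      then show ?thesis using validD(1)[OF v] by simp
    next
      case False
      then show ?thesis using validD(3)[OF v, of e] e by simp
    qed
  qed
qed

lemma pre_Brk: "pre z \<in> Brk N"
proof -
  have "lam (pre z)" unfolding lam_def
  proof (intro allI impI)
    fix a b assume ab: "a < b" "b \<le> a + pre z a"
    then have a: "z a \<noteq> 0" and pa: "pre z a = ff z a - a" by (auto simp: pre_def split: if_splits)
    have va: "valid z a (ff z a)" by (rule ff_valid[OF a])
    have fa: "a + z a < ff z a" by (rule validD(1)[OF va])
    have pa': "a + pre z a = ff z a" using pa fa by simp
    show "b + pre z b \<le> a + pre z a"
    proof (cases "z b = 0")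
      case True then show ?thesis using ab by (simp add: pre_def)
    next
      case False
      have vb: "valid z b (ff z b)" by (rule ff_valid[OF False])
      have pb': "b + pre z b = ff z b" using validD(1)[OF vb] False by (simp add: pre_def)
      show ?thesis
      proof (cases "b \<le> a + z a")
        case True
        then have "ff z b \<le> a + z a" using ff_inner[OF a False ab(1)] by blast
        then show ?thesis using pa' pb' fa by simp
      next
        case nle: False
        have "b \<noteq> ff z a" using validD(2)[OF va] False by auto
        then have "b < ff z a" using ab pa' by simp
        then have "ff z b \<le> ff z a" using ff_outer[OF a False] nle by simp
        then show ?thesis using pa' pb' by simp
      qed
    qed
  qed
  moreover have "\<forall>b. pre z b \<noteq> 0 \<longrightarrow> 0 < b \<and> b + pre z b \<le> N"
  proof (intro allI impI)
    fix b assume "pre z b \<noteq> 0"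
    then have b: "z b \<noteq> 0" by (auto simp: pre_def split: if_splits)
    have "b + z b < ff z b" by (rule validD(1)[OF ff_valid[OF b]])
    then have "b + pre z b = ff z b" using b by (simp add: pre_def)
    then show "0 < b \<and> b + pre z b \<le> N" using BrkD(2)[OF zB, of b] b ff_N[OF b] by simp
  qed
  ultimately show ?thesis by (simp add: Brk_def)
qed

lemma P_pre: "P (pre z) = z"
proof (rule ext)
  fix a
  show "P (pre z) a = z a"
  proof (cases "z a = 0")
    case True then show ?thesis by (simp add: P_def pre_def)
  next
    case False
    note a = False
    define x where "x = pre z"
    define c where "c = a + z a + 1"
    have va: "valid z a (ff z a)" by (rule ff_valid[OF a])
    have fa: "a + z a < ff z a" by (rule validD(1)[OF va])
    have xa: "a + x a = ff z a" using fa a by (simp add: x_def pre_def)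
    have xpos: "0 < x a" using xa fa by simp
    have cfa: "c \<le> ff z a" using fa by (simp add: c_def)
    have xc: "c + x c = ff z a"
    proof (cases "z c = 0")
      case True
      have "valid z a c" by (rule validI) (use True in \<open>auto simp: c_def\<close>)
      then have "ff z a \<le> c" by (rule ff_le)
      then show ?thesis using cfa True by (simp add: x_def pre_def)
    next
      case False
      have "c \<noteq> ff z a" using validD(2)[OF va] False by auto
      then have "c < ff z a" using cfa by simp
      then have le1: "ff z c \<le> ff z a" using ff_outer[OF a False] by (simp add: c_def)
      have le2: "ff z a \<le> ff z c" using ff_next[OF a] False by (simp add: c_def)
      have "c + z c < ff z c" by (rule validD(1)[OF ff_valid[OF False]])
      then have "c + x c = ff z c" using False by (simp add: x_def pre_def)
      then show ?thesis using le1 le2 by simp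
    qed
    have "b0 x a = c"
      unfolding b0_def
    proof (rule Least_equality)
      show "a < c \<and> c + x c = a + x a" using xc xa by (simp add: c_def)
    next
      fix b assume b: "a < b \<and> b + x b = a + x a"
      show "c \<le> b"
      proof (rule ccontr)
        assume "\<not> c \<le> b"
        then have ble: "b \<le> a + z a" by (simp add: c_def)
        show False
        proof (cases "z b = 0")
          case True
          then have "b + x b = b" by (simp add: x_def pre_def)
          then show False using b ble xa fa by simp
        next
          case False
          have "ff z b \<le> a + z a" using ff_inner[OF a False] b ble by blast
          moreover have "b + z b < ff z b" by (rule validD(1)[OF ff_valid[OF False]])
          ultimately have "b + x b \<le> a + z a" using False by (simp add: x_def pre_def)
          then show False using b xa fa by simp
        qed
      qed
    qed
    then have "tt x a = z a" by (simp add: tt_def c_def)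
    then show ?thesis using xpos by (simp add: P_def x_def)
  qed
qed

end

lemma image_P: "P ` Brk N = {z. Good N z}"
proof
  show "P ` Brk N \<subseteq> {z. Good N z}" using P_good by blast
  show "{z. Good N z} \<subseteq> P ` Brk N"
  proof
    fix z assume "z \<in> {z. Good N z}"
    then have g: "Good N z" by simp
    then have "P (pre z) = z" "pre z \<in> Brk N" using P_pre pre_Brk by blast+
    then show "z \<in> P ` Brk N" by (metis image_eqI)
  qed
qed


lemma upper_vandermonde:
  "(\<Sum>j\<le>M. (j choose p) * ((M - j) choose r)) = Suc M choose (p + r + 1)"
proof (induction r arbitrary: M)
  case 0
  then show ?case using sum_choose_upper[of p M] by simp
next
  case (Suc r)
  note IHr = Suc.IH
  show ?case
  proof (induction M)
    case 0 then show ?case by simp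
  next
    case (Suc M)
    have "(\<Sum>j\<le>Suc M. (j choose p) * ((Suc M - j) choose Suc r))
        = (\<Sum>j\<le>M. (j choose p) * ((Suc M - j) choose Suc r))"
      by (simp add: sum.atMost_Suc)
    also have "\<dots> = (\<Sum>j\<le>M. (j choose p) * ((M - j) choose r) + (j choose p) * ((M - j) choose Suc r))"
    proof (rule sum.cong)
      fix j assume "j \<in> {..M}"
      then have "Suc M - j = Suc (M - j)" by auto
      then show "(j choose p) * ((Suc M - j) choose Suc r) = (j choose p) * ((M - j) choose r) + (j choose p) * ((M - j) choose Suc r)"
        by (simp add: algebra_simps)
    qed simp
    also have "\<dots> = (Suc M choose (p + r + 1)) + (Suc M choose (p + Suc r + 1))"
      by (simp only: sum.distrib IHr Suc.IH)
    also have "\<dots> = (Suc (Suc M) choose (p + Suc r + 1))" by simp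
    finally show ?case .
  qed
qed

definition Gc :: "nat \<Rightarrow> nat \<Rightarrow> nat" where
  "Gc n k = (n choose (2*k)) * catalan k"

lemma inner_sum:
  "(\<Sum>m\<in>{1..n}. ((m - 1) choose p) * ((n - m) choose r)) = n choose (p + r + 1)"
proof (cases n)
  case 0 then show ?thesis by simp
next
  case (Suc M)
  have "(\<Sum>m\<in>{1..n}. ((m - 1) choose p) * ((n - m) choose r)) = (\<Sum>j\<in>{0..M}. (j choose p) * ((M - j) choose r))"
  proof -
    have "(\<Sum>m\<in>{1..Suc M}. ((m - 1) choose p) * ((Suc M - m) choose r)) = (\<Sum>j\<in>{0..M}. ((Suc j - 1) choose p) * ((Suc M - Suc j) choose r))"
      by (subst sum.shift_bounds_cl_Suc_ivl[symmetric]) simp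
    then show ?thesis using Suc by simp
  qed
  also have "\<dots> = n choose (p + r + 1)" using upper_vandermonde[where M=M and p=p and r=r] Suc by (simp add: atLeast0AtMost)
  finally show ?thesis .
qed

lemma Gc_0: "Gc 0 k = (if k = 0 then 1 else 0)"
  by (simp add: Gc_def catalan_def)

lemma Gc_Suc_0: "Gc (Suc n) 0 = 1"
  by (simp add: Gc_def catalan_def)

lemma Gc_rec:
  "Gc (Suc n) (Suc k) = Gc n (Suc k) + (\<Sum>m\<in>{1..n}. \<Sum>i\<le>k. Gc (m - 1) i * Gc (n - m) (k - i))"
proof -
  have "(\<Sum>m\<in>{1..n}. \<Sum>i\<le>k. Gc (m - 1) i * Gc (n - m) (k - i))
      = (\<Sum>i\<le>k. \<Sum>m\<in>{1..n}. (catalan i * catalan (k - i)) * (((m - 1) choose (2*i)) * ((n - m) choose (2*(k-i)))))"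
    by (subst sum.swap) (simp add: Gc_def algebra_simps)
  also have "\<dots> = (\<Sum>i\<le>k. (catalan i * catalan (k - i)) * (n choose (2*k + 1)))"
  proof (rule sum.cong)
    fix i assume i: "i \<in> {..k}"
    have "(\<Sum>m\<in>{1..n}. (catalan i * catalan (k - i)) * (((m - 1) choose (2*i)) * ((n - m) choose (2*(k-i)))))
       = (catalan i * catalan (k - i)) * (\<Sum>m\<in>{1..n}. ((m - 1) choose (2*i)) * ((n - m) choose (2*(k-i))))"
      by (simp add: sum_distrib_left)
    also have "\<dots> = (catalan i * catalan (k - i)) * (n choose (2*i + 2*(k-i) + 1))"
      by (simp only: inner_sum)
    also have "2*i + 2*(k-i) + 1 = 2*k + 1" using i by simp
    finally show "(\<Sum>m\<in>{1..n}. (catalan i * catalan (k - i)) * (((m - 1) choose (2*i)) * ((n - m) choose (2*(k-i)))))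
       = (catalan i * catalan (k - i)) * (n choose (2*k + 1))" .
  qed simp
  also have "\<dots> = catalan (Suc k) * (n choose (2*k + 1))"
    by (simp add: sum_distrib_right[symmetric] catalan_conv)
  finally have e: "(\<Sum>m\<in>{1..n}. \<Sum>i\<le>k. Gc (m - 1) i * Gc (n - m) (k - i)) = catalan (Suc k) * (n choose (2*k + 1))" .
  have "Gc (Suc n) (Suc k) = ((n choose (2*k + 1)) + (n choose (2*k+2))) * catalan (Suc k)"
  proof -
    have "2 * Suc k = Suc (2*k + 1)" by simp
    then show ?thesis unfolding Gc_def by (simp only: binomial_Suc_Suc) simp
  qed
  then show ?thesis unfolding e by (simp add: Gc_def algebra_simps)
qed


definition VV :: "nat \<Rightarrow> (nat \<Rightarrow> nat) set" where
  "VV k = {z. lam z \<and> (\<forall>a b. a < b \<longrightarrow> b \<le> a + z a \<longrightarrow> b + z b = a + z a \<longrightarrow> z b = 0)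
              \<and> (\<forall>a. z a \<noteq> 0 \<longrightarrow> 0 < a \<and> a + z a \<le> k)}"

lemma VVI:
  assumes "lam z" "\<And>a b. a < b \<Longrightarrow> b \<le> a + z a \<Longrightarrow> b + z b = a + z a \<Longrightarrow> z b = 0"
    "\<And>a. z a \<noteq> 0 \<Longrightarrow> 0 < a \<and> a + z a \<le> k"
  shows "z \<in> VV k"
  unfolding VV_def using assms by blast

lemma VVD:
  assumes v: "z \<in> VV k"
  shows "lam z" "\<And>a b. a < b \<Longrightarrow> b \<le> a + z a \<Longrightarrow> b + z b = a + z a \<Longrightarrow> z b = 0"
    "\<And>a. z a \<noteq> 0 \<Longrightarrow> 0 < a" "\<And>a. z a \<noteq> 0 \<Longrightarrow> a + z a \<le> k"
proof -
  have h: "lam z \<and> (\<forall>a b. a < b \<longrightarrow> b \<le> a + z a \<longrightarrow> b + z b = a + z a \<longrightarrow> z b = 0)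
              \<and> (\<forall>a. z a \<noteq> 0 \<longrightarrow> 0 < a \<and> a + z a \<le> k)" using v unfolding VV_def by (rule CollectD)
  show "lam z" using h by (rule conjunct1)
  have h3: "\<forall>a. z a \<noteq> 0 \<longrightarrow> 0 < a \<and> a + z a \<le> k" using h by (rule conjunct2[THEN conjunct2])
  show "\<And>a. z a \<noteq> 0 \<Longrightarrow> 0 < a" "\<And>a. z a \<noteq> 0 \<Longrightarrow> a + z a \<le> k" using h3 by blast+
  have h2: "\<forall>a b. a < b \<longrightarrow> b \<le> a + z a \<longrightarrow> b + z b = a + z a \<longrightarrow> z b = 0" using h by (rule conjunct2[THEN conjunct1])
  fix a b assume "a < b" "b \<le> a + z a" "b + z b = a + z a"
  then show "z b = 0" using h2 by blast
qed

lemma VV_0_at0: "z \<in> VV k \<Longrightarrow> z 0 = 0"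
  using VVD(3)[of z k 0] by blast

lemma Good_VV: "Good (Suc k) z \<longleftrightarrow> z \<in> VV k"
proof
  assume g: "Good (Suc k) z"
  have zB: "z \<in> Brk (Suc k)" by (rule GoodD(1)[OF g])
  show "z \<in> VV k"
  proof (rule VVI)
    show "lam z" using zB by (simp add: Brk_def)
    show "\<And>a b. a < b \<Longrightarrow> b \<le> a + z a \<Longrightarrow> b + z b = a + z a \<Longrightarrow> z b = 0" by (rule GoodD(3)[OF g])
    fix a assume "z a \<noteq> 0"
    then show "0 < a \<and> a + z a \<le> k" using BrkD(2)[OF zB] GoodD(2)[OF g] by fastforce
  qed
next
  assume v: "z \<in> VV k"
  show "Good (Suc k) z"
  proof (rule GoodI)
    have s: "\<forall>a. z a \<noteq> 0 \<longrightarrow> 0 < a \<and> a + z a \<le> Suc k"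
      using VVD(3,4)[OF v] by fastforce
    show "z \<in> Brk (Suc k)" unfolding Brk_def using VVD(1)[OF v] s by blast
    show "\<And>a. z a \<noteq> 0 \<Longrightarrow> a + z a < Suc k" using VVD(4)[OF v] by fastforce
    show "\<And>a b. a < b \<Longrightarrow> b \<le> a + z a \<Longrightarrow> b + z b = a + z a \<Longrightarrow> z b = 0" by (rule VVD(2)[OF v])
  qed
qed

lemma window:
  assumes u: "u \<in> VV k" and zw: "\<And>a. lo < a \<Longrightarrow> a \<le> lo + k \<Longrightarrow> z a = u (a - lo)"
    and p: "lo < p" "p \<le> lo + k" and zp: "z p \<noteq> 0"
  shows "p + z p \<le> lo + k"
    "\<And>q. p < q \<Longrightarrow> q \<le> p + z p \<Longrightarrow> q + z q \<le> p + z p"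
    "\<And>q. p < q \<Longrightarrow> q \<le> p + z p \<Longrightarrow> q + z q = p + z p \<Longrightarrow> z q = 0"
proof -
  define p' where "p' = p - lo"
  have pp: "p = p' + lo" "z p = u p'" using p zw[OF p] by (auto simp: p'_def)
  have up: "u p' \<noteq> 0" using zp pp by simp
  have b: "p' + u p' \<le> k" using VVD(4)[OF u up] .
  then show "p + z p \<le> lo + k" using pp by simp
  fix q assume q: "p < q" "q \<le> p + z p"
  define q' where "q' = q - lo"
  have qw: "lo < q" "q \<le> lo + k" using q p b pp by auto
  have qq: "q = q' + lo" "z q = u q'" using qw zw[OF qw] by (auto simp: q'_def)
  have q'': "p' < q'" "q' \<le> p' + u p'" using q pp qq by auto
  have "q' + u q' \<le> p' + u p'" using lamD[OF VVD(1)[OF u] q''] .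
  then show "q + z q \<le> p + z p" using pp qq by simp
  assume "q + z q = p + z p"
  then have "q' + u q' = p' + u p'" using pp qq by simp
  from VVD(2)[OF u q'' this] show "z q = 0" using qq by simp
qed


definition sh :: "(nat \<Rightarrow> nat) \<Rightarrow> nat \<Rightarrow> nat" where
  "sh w = (\<lambda>a. if a \<le> 1 then 0 else w (a - 1))"

definition res :: "nat \<Rightarrow> nat \<Rightarrow> (nat \<Rightarrow> nat) \<Rightarrow> nat \<Rightarrow> nat" where
  "res lo k z = (\<lambda>a. if 0 < a \<and> a \<le> k then z (a + lo) else 0)"

definition glue :: "nat \<Rightarrow> (nat \<Rightarrow> nat) \<Rightarrow> (nat \<Rightarrow> nat) \<Rightarrow> nat \<Rightarrow> nat" where
  "glue m u w = (\<lambda>a. if a = 0 then 0 else if a = 1 then m else if a \<le> m then u (a - 1)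
                      else if a = Suc m then 0 else w (a - Suc m))"

lemma VV_support_le: "z \<in> VV k \<Longrightarrow> z a \<noteq> 0 \<Longrightarrow> a \<le> k"
  using VVD(4)[of z k a] by simp

lemma sh_VV:
  assumes w: "w \<in> VV n"
  shows "sh w \<in> VV (Suc n)"
proof -
  have zw: "\<And>a. 1 < a \<Longrightarrow> a \<le> 1 + n \<Longrightarrow> sh w a = w (a - 1)" by (simp add: sh_def)
  have zero: "\<And>a. a \<le> 1 \<Longrightarrow> sh w a = 0" by (simp add: sh_def)
  have big: "\<And>a. 1 + n < a \<Longrightarrow> sh w a = 0"
  proof -
    fix a assume "1 + n < a"
    then have "w (a - 1) = 0" using VV_support_le[OF w, of "a - 1"] by fastforce
    then show "sh w a = 0" by (simp add: sh_def)
  qed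
  have inw: "1 < p \<and> p \<le> 1 + n" if "sh w p \<noteq> 0" for p
    using zero big that by (meson not_le)
  show ?thesis
  proof (rule VVI)
    show "lam (sh w)" unfolding lam_def
    proof (intro allI impI)
      fix p q assume pq: "p < q" "q \<le> p + sh w p"
      then have "sh w p \<noteq> 0" by auto
      then show "q + sh w q \<le> p + sh w p" using window(2)[OF w zw _ _ _ pq] inw by blast
    qed
    fix a b assume ab: "a < b" "b \<le> a + sh w a" "b + sh w b = a + sh w a"
    then have "sh w a \<noteq> 0" by auto
    then show "sh w b = 0" using window(3)[OF w zw _ _ _ ab] inw by blast
  next
    fix a assume a: "sh w a \<noteq> 0"
    then show "0 < a \<and> a + sh w a \<le> Suc n" using window(1)[OF w zw _ _ a] inw[OF a] by simp
  qed
qed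

lemma glue_VV:
  assumes u: "u \<in> VV (m - 1)" and w: "w \<in> VV (n - m)" and m: "1 \<le> m" "m \<le> n"
  shows "glue m u w \<in> VV (Suc n)"
proof -
  let ?z = "glue m u w"
  have z0: "?z 0 = 0" and z1: "?z 1 = m" and zm: "?z (Suc m) = 0" using m by (auto simp: glue_def)
  have zu: "\<And>a. 1 < a \<Longrightarrow> a \<le> 1 + (m - 1) \<Longrightarrow> ?z a = u (a - 1)" using m by (auto simp: glue_def)
  have zw: "\<And>a. Suc m < a \<Longrightarrow> a \<le> Suc m + (n - m) \<Longrightarrow> ?z a = w (a - Suc m)" using m by (auto simp: glue_def)
  have big: "\<And>a. Suc m + (n - m) < a \<Longrightarrow> ?z a = 0"
  proof -
    fix a assume a: "Suc m + (n - m) < a"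
    then have "w (a - Suc m) = 0" using VV_support_le[OF w, of "a - Suc m"] by fastforce
    then show "?z a = 0" using a m by (simp add: glue_def)
  qed
  have cases: "p = 1 \<or> (1 < p \<and> p \<le> 1 + (m - 1)) \<or> (Suc m < p \<and> p \<le> Suc m + (n - m))" if "?z p \<noteq> 0" for p
  proof -
    have "p \<noteq> 0"
    proof
      assume "p = 0" then show False using that z0 by simp
    qed
    moreover have "p \<noteq> Suc m"
    proof
      assume "p = Suc m" then show False using that zm by simp
    qed
    moreover have "\<not> Suc m + (n - m) < p" using that big by metis
    ultimately have h: "p \<noteq> 0" "p \<noteq> Suc m" "p \<le> Suc m + (n - m)" by auto
    show ?thesis
    proof (cases "p = 1")
      case True then show ?thesis by simp
    next
      case False
      show ?thesis
      proof (cases "p \<le> m")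
        case True then have "1 < p \<and> p \<le> 1 + (m - 1)" using h False m by simp
        then show ?thesis by blast
      next
        case False then have "Suc m < p \<and> p \<le> Suc m + (n - m)" using h by simp
        then show ?thesis by blast
      qed
    qed
  qed
  have one_inner: "q + ?z q \<le> m" if "1 < q" "q \<le> m" for q
  proof (cases "u (q - 1) = 0")
    case True then show ?thesis using zu[of q] that m by simp
  next
    case False
    then have "(q - 1) + u (q - 1) \<le> m - 1" using VVD(4)[OF u] by blast
    then show ?thesis using zu[of q] that m by simp
  qed
  show ?thesis
  proof (rule VVI)
    show "lam ?z" unfolding lam_def
    proof (intro allI impI)
      fix p q assume pq: "p < q" "q \<le> p + ?z p"
      then have zp: "?z p \<noteq> 0" by auto
      from cases[OF zp] show "q + ?z q \<le> p + ?z p"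
      proof (elim disjE)
        assume p1: "p = 1"
        show ?thesis
        proof (cases "q \<le> m")
          case True then show ?thesis using one_inner[of q] pq p1 z1 by simp
        next
          case False then have "q = Suc m" using pq p1 z1 by simp
          then show ?thesis using p1 z1 zm by simp
        qed
      next
        assume "1 < p \<and> p \<le> 1 + (m - 1)"
        then show ?thesis using window(2)[OF u zu _ _ zp pq] by blast
      next
        assume "Suc m < p \<and> p \<le> Suc m + (n - m)"
        then show ?thesis using window(2)[OF w zw _ _ zp pq] by blast
      qed
    qed
    fix a b assume ab: "a < b" "b \<le> a + ?z a" "b + ?z b = a + ?z a"
    then have za: "?z a \<noteq> 0" by auto
    from cases[OF za] show "?z b = 0"
    proof (elim disjE)
      assume a1: "a = 1"
      show ?thesis
      proof (cases "b \<le> m")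
        case True then show ?thesis using one_inner[of b] ab a1 z1 by simp
      next
        case False then have "b = Suc m" using ab a1 z1 by simp
        then show ?thesis using zm by simp
      qed
    next
      assume "1 < a \<and> a \<le> 1 + (m - 1)"
      then show ?thesis using window(3)[OF u zu _ _ za ab] by blast
    next
      assume "Suc m < a \<and> a \<le> Suc m + (n - m)"
      then show ?thesis using window(3)[OF w zw _ _ za ab] by blast
    qed
  next
    fix a assume za: "?z a \<noteq> 0"
    from cases[OF za] show "0 < a \<and> a + ?z a \<le> Suc n"
    proof (elim disjE)
      assume "a = 1" then show ?thesis using z1 m by simp
    next
      assume a: "1 < a \<and> a \<le> 1 + (m - 1)"
      then show ?thesis using window(1)[OF u zu _ _ za] m by simp
    next
      assume a: "Suc m < a \<and> a \<le> Suc m + (n - m)"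
      then show ?thesis using window(1)[OF w zw _ _ za] m by simp
    qed
  qed
qed


lemma res_VV:
  assumes z: "z \<in> VV K"
    and cl: "\<And>a. lo < a \<Longrightarrow> a \<le> lo + k \<Longrightarrow> z a \<noteq> 0 \<Longrightarrow> a + z a \<le> lo + k"
  shows "res lo k z \<in> VV k"
proof -
  let ?u = "res lo k z"
  have ui: "?u b = z (b + lo)" if "0 < b" "b \<le> k" for b using that by (simp add: res_def)
  have nz: "0 < b \<and> b + ?u b \<le> k" if "?u b \<noteq> 0" for b
  proof -
    have b: "0 < b" "b \<le> k" using that by (auto simp: res_def split: if_splits)
    have "z (b + lo) \<noteq> 0" using that ui[OF b] by simp
    then have "(b + lo) + z (b + lo) \<le> lo + k" using cl[of "b + lo"] b by simp
    then show ?thesis using b ui[OF b] by simp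
  qed
  show ?thesis
  proof (rule VVI)
    show "lam ?u" unfolding lam_def
    proof (intro allI impI)
      fix p q assume pq: "p < q" "q \<le> p + ?u p"
      then have "?u p \<noteq> 0" by auto
      then have p: "0 < p" "p + ?u p \<le> k" using nz by auto
      have q: "0 < q" "q \<le> k" using pq p by auto
      have "(q + lo) + z (q + lo) \<le> (p + lo) + z (p + lo)"
        using lamD[OF VVD(1)[OF z], of "p + lo" "q + lo"] pq ui[of p] ui[of q] p q by simp
      then show "q + ?u q \<le> p + ?u p" using ui[of p] ui[of q] p q by simp
    qed
    fix a b assume ab: "a < b" "b \<le> a + ?u a" "b + ?u b = a + ?u a"
    then have "?u a \<noteq> 0" by auto
    then have a: "0 < a" "a + ?u a \<le> k" using nz by auto
    have b: "0 < b" "b \<le> k" using ab a by auto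
    have "z (b + lo) = 0"
    proof (rule VVD(2)[OF z])
      show "a + lo < b + lo" using ab by simp
      show "b + lo \<le> a + lo + z (a + lo)" using ab ui[of a] a by simp
      show "b + lo + z (b + lo) = a + lo + z (a + lo)" using ab ui[of a] ui[of b] a b by simp
    qed
    then show "?u b = 0" using ui[OF b] by simp
  next
    fix a assume "?u a \<noteq> 0" then show "0 < a \<and> a + ?u a \<le> k" by (rule nz)
  qed
qed

lemma decomp0:
  assumes z: "z \<in> VV (Suc n)" and z1: "z 1 = 0"
  shows "res 1 n z \<in> VV n" "sh (res 1 n z) = z"
proof -
  show "res 1 n z \<in> VV n"
  proof (rule res_VV[OF z])
    fix a assume "1 < a" "a \<le> 1 + n" "z a \<noteq> 0"
    then show "a + z a \<le> 1 + n" using VVD(4)[OF z] by simp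
  qed
  show "sh (res 1 n z) = z"
  proof (rule ext)
    fix a
    show "sh (res 1 n z) a = z a"
    proof (cases "a \<le> 1")
      case True
      then have "a = 0 \<or> a = 1" by auto
      then show ?thesis using z1 VV_0_at0[OF z] True by (auto simp: sh_def)
    next
      case False
      show ?thesis
      proof (cases "a \<le> Suc n")
        case True then show ?thesis using False by (simp add: sh_def res_def)
      next
        case nle: False
        then have "z a = 0" using VV_support_le[OF z, of a] by fastforce
        then show ?thesis using False nle by (simp add: sh_def res_def)
      qed
    qed
  qed
qed

lemma decomp1:
  assumes z: "z \<in> VV (Suc n)" and z1: "z 1 = m" and m: "0 < m"
  shows "m \<le> n" "res 1 (m - 1) z \<in> VV (m - 1)" "res (Suc m) (n - m) z \<in> VV (n - m)"
    "glue m (res 1 (m - 1) z) (res (Suc m) (n - m) z) = z"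
proof -
  have l: "lam z" by (rule VVD(1)[OF z])
  have "1 + z 1 \<le> Suc n" using VVD(4)[OF z, of 1] m z1 by simp
  then show mn: "m \<le> n" using z1 by simp
  show "res 1 (m - 1) z \<in> VV (m - 1)"
  proof (rule res_VV[OF z])
    fix a assume a: "1 < a" "a \<le> 1 + (m - 1)" "z a \<noteq> 0"
    have le: "a + z a \<le> 1 + z 1" using lamD[OF l, of 1 a] a z1 m by simp
    have "a + z a \<noteq> 1 + z 1"
    proof
      assume eq: "a + z a = 1 + z 1"
      have "a \<le> 1 + z 1" using a z1 m by simp
      from VVD(2)[OF z _ this eq] a show False by simp
    qed
    then show "a + z a \<le> 1 + (m - 1)" using le z1 m by simp
  qed
  show "res (Suc m) (n - m) z \<in> VV (n - m)"
  proof (rule res_VV[OF z])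
    fix a assume a: "Suc m < a" "a \<le> Suc m + (n - m)" "z a \<noteq> 0"
    then show "a + z a \<le> Suc m + (n - m)" using VVD(4)[OF z] mn by simp
  qed
  have zm: "z (Suc m) = 0" using lam_end0[OF l, of 1] z1 by simp
  show "glue m (res 1 (m - 1) z) (res (Suc m) (n - m) z) = z"
  proof (rule ext)
    fix a
    consider "a = 0" | "a = 1" | "1 < a \<and> a \<le> m" | "a = Suc m" | "Suc m < a \<and> a \<le> Suc n" | "Suc n < a"
      by linarith
    then show "glue m (res 1 (m - 1) z) (res (Suc m) (n - m) z) a = z a"
    proof cases
      case 1 then show ?thesis using VV_0_at0[OF z] by (simp add: glue_def)
    next
      case 2 then show ?thesis using z1 by (simp add: glue_def)
    next
      case 3
      then have "a - 1 \<le> m - 1" "0 < a - 1" "a - 1 + 1 = a" "a \<noteq> 0" "a \<noteq> 1" by auto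
      then show ?thesis using 3 by (simp add: glue_def res_def)
    next
      case 4 then show ?thesis using zm m by (simp add: glue_def)
    next
      case 5
      then have "a - Suc m \<le> n - m" "0 < a - Suc m" "a - Suc m + Suc m = a" "a \<noteq> 0" "a \<noteq> 1" "\<not> a \<le> m" "a \<noteq> Suc m" using mn by auto
      then show ?thesis using 5 by (simp add: glue_def res_def)
    next
      case 6
      then have "z a = 0" using VV_support_le[OF z, of a] by fastforce
      then show ?thesis using 6 mn by (simp add: glue_def res_def)
    qed
  qed
qed

lemma res_sh: assumes w: "w \<in> VV n" shows "res 1 n (sh w) = w"
proof (rule ext)
  fix b
  show "res 1 n (sh w) b = w b"
  proof (cases "0 < b \<and> b \<le> n")
    case True then show ?thesis by (simp add: res_def sh_def)
  next
    case False
    then have "w b = 0" using VV_support_le[OF w, of b] VVD(3)[OF w, of b] by fastforce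
    moreover have "res 1 n (sh w) b = 0" using False unfolding res_def by auto
    ultimately show ?thesis by simp
  qed
qed

lemma res_glue1: assumes u: "u \<in> VV (m - 1)" and m: "0 < m"
  shows "res 1 (m - 1) (glue m u w) = u"
proof (rule ext)
  fix b
  show "res 1 (m - 1) (glue m u w) b = u b"
  proof (cases "0 < b \<and> b \<le> m - 1")
    case True
    then have bm: "Suc b \<le> m" "Suc b \<noteq> 1" "Suc b \<noteq> 0" "b + 1 - 1 = b" using m by auto
    then show ?thesis using True by (simp add: res_def glue_def)
  next
    case False
    then have "u b = 0" using VV_support_le[OF u, of b] VVD(3)[OF u, of b] by fastforce
    moreover have "res 1 (m - 1) (glue m u w) b = 0" using False unfolding res_def by auto
    ultimately show ?thesis by simp
  qed
qed

lemma res_glue2: assumes w: "w \<in> VV (n - m)" and m: "0 < m"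
  shows "res (Suc m) (n - m) (glue m u w) = w"
proof (rule ext)
  fix b
  show "res (Suc m) (n - m) (glue m u w) b = w b"
  proof (cases "0 < b \<and> b \<le> n - m")
    case True
    then have bm: "\<not> b + Suc m \<le> m" "b + Suc m \<noteq> 1" "b + Suc m \<noteq> 0" "b + Suc m \<noteq> Suc m" "b + Suc m - Suc m = b" using m by auto
    then show ?thesis using True by (simp add: res_def glue_def)
  next
    case False
    then have "w b = 0" using VV_support_le[OF w, of b] VVD(3)[OF w, of b] by fastforce
    moreover have "res (Suc m) (n - m) (glue m u w) b = 0" using False unfolding res_def by auto
    ultimately show ?thesis by simp
  qed
qed


lemma VV_le: "z \<in> VV k \<Longrightarrow> z a \<le> k"
  using VVD(4)[of z k a] by (cases "z a = 0") auto

lemma VV_zero: "z \<in> VV k \<Longrightarrow> k < a \<Longrightarrow> z a = 0"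
  using VV_support_le[of z k a] by (cases "z a = 0") auto

lemma finite_VV: "finite (VV k)"
proof -
  let ?h = "\<lambda>z. map z [0..<Suc k]"
  have inj: "inj_on ?h (VV k)"
  proof (rule inj_onI)
    fix z z' assume z: "z \<in> VV k" and z': "z' \<in> VV k" and e: "?h z = ?h z'"
    show "z = z'"
    proof (rule ext)
      fix a
      show "z a = z' a"
      proof (cases "a \<le> k")
        case True
        have "\<forall>x\<in>set [0..<Suc k]. z x = z' x" using e by (simp only: map_eq_conv)
        moreover have "a \<in> set [0..<Suc k]" unfolding set_upt using True by simp
        ultimately show ?thesis by blast
      next
        case False
        then show ?thesis using VV_zero[OF z, of a] VV_zero[OF z', of a] by simp
      qed
    qed
  qed
  have "?h ` VV k \<subseteq> {xs. set xs \<subseteq> {0..k} \<and> length xs = Suc k}"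
    using VV_le by fastforce
  moreover have "finite {xs. set xs \<subseteq> {0..k} \<and> length xs = Suc k}"
    by (rule finite_lists_length_eq) simp
  ultimately have "finite (?h ` VV k)" by (rule finite_subset)
  then show ?thesis using finite_image_iff[OF inj] by simp
qed

lemma nz_set_finite: "z \<in> VV k \<Longrightarrow> finite {a. z a \<noteq> 0}"
  by (rule finite_subset[of _ "{..k}"]) (auto dest: VV_support_le)

lemma nz_le: assumes z: "z \<in> VV k" shows "nz z \<le> k"
proof -
  have "{a. z a \<noteq> 0} \<subseteq> {1..k}" using VVD(3,4)[OF z] by fastforce
  then have "card {a. z a \<noteq> 0} \<le> card {1..k}" by (rule card_mono[rotated]) simp
  then show ?thesis by (simp add: nz_def)
qed

lemma nz_sh: assumes w: "w \<in> VV n" shows "nz (sh w) = nz w"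
proof -
  have "{a. sh w a \<noteq> 0} = Suc ` {a. w a \<noteq> 0}"
  proof
    show "{a. sh w a \<noteq> 0} \<subseteq> Suc ` {a. w a \<noteq> 0}"
    proof
      fix a assume "a \<in> {a. sh w a \<noteq> 0}"
      then have "1 < a" "w (a - 1) \<noteq> 0" by (auto simp: sh_def split: if_splits)
      then show "a \<in> Suc ` {a. w a \<noteq> 0}" by (intro image_eqI[of _ _ "a - 1"]) auto
    qed
    show "Suc ` {a. w a \<noteq> 0} \<subseteq> {a. sh w a \<noteq> 0}"
    proof
      fix a assume "a \<in> Suc ` {a. w a \<noteq> 0}"
      then obtain b where b: "a = Suc b" "w b \<noteq> 0" by blast
      then have "0 < b" using VVD(3)[OF w] by blast
      then show "a \<in> {a. sh w a \<noteq> 0}" using b by (simp add: sh_def)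
    qed
  qed
  then show ?thesis by (simp add: nz_def card_image)
qed

lemma nz_glue:
  assumes u: "u \<in> VV (m - 1)" and w: "w \<in> VV (n - m)" and m: "0 < m"
  shows "nz (glue m u w) = Suc (nz u + nz w)"
proof -
  let ?z = "glue m u w"
  let ?U = "Suc ` {b. u b \<noteq> 0}" and ?W = "(\<lambda>b. b + Suc m) ` {b. w b \<noteq> 0}"
  have eq: "{a. ?z a \<noteq> 0} = insert 1 (?U \<union> ?W)"
  proof
    show "{a. ?z a \<noteq> 0} \<subseteq> insert 1 (?U \<union> ?W)"
    proof
      fix a assume "a \<in> {a. ?z a \<noteq> 0}"
      then have za: "?z a \<noteq> 0" by simp
      consider "a = 0" | "a = 1" | "1 < a \<and> a \<le> m" | "a = Suc m" | "Suc m < a" by linarith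
      then show "a \<in> insert 1 (?U \<union> ?W)"
      proof cases
        case 1 then show ?thesis using za by (simp add: glue_def)
      next
        case 2 then show ?thesis by simp
      next
        case 3
        then have "u (a - 1) \<noteq> 0" using za by (simp add: glue_def)
        moreover have "a = Suc (a - 1)" using 3 by simp
        ultimately have "a \<in> ?U" by (metis (mono_tags, lifting) image_eqI mem_Collect_eq)
        then show ?thesis by simp
      next
        case 4 then show ?thesis using za m by (simp add: glue_def)
      next
        case 5
        then have "w (a - Suc m) \<noteq> 0" using za by (simp add: glue_def)
        moreover have "a = (a - Suc m) + Suc m" using 5 by simp
        ultimately have "a \<in> ?W" by (metis (mono_tags, lifting) image_eqI mem_Collect_eq)
        then show ?thesis by simp
      qed
    qed
    show "insert 1 (?U \<union> ?W) \<subseteq> {a. ?z a \<noteq> 0}"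
    proof
      fix a assume a: "a \<in> insert 1 (?U \<union> ?W)"
      show "a \<in> {a. ?z a \<noteq> 0}"
      proof (cases "a = 1")
        case True then show ?thesis using m by (simp add: glue_def)
      next
        case False
        then have "a \<in> ?U \<or> a \<in> ?W" using a by simp
        then show ?thesis
        proof
          assume "a \<in> ?U"
          then obtain b where b: "a = Suc b" "u b \<noteq> 0" by blast
          then have "0 < b" "b + u b \<le> m - 1" using VVD(3,4)[OF u] by auto
          then have "a \<noteq> 0" "a \<noteq> 1" "a \<le> m" "a - 1 = b" using b m by auto
          then show ?thesis using b by (simp add: glue_def)
        next
          assume "a \<in> ?W"
          then obtain b where b: "a = b + Suc m" "w b \<noteq> 0" by blast
          then have "0 < b" using VVD(3)[OF w] by auto
          then have "a \<noteq> 0" "a \<noteq> 1" "\<not> a \<le> m" "a \<noteq> Suc m" "a - Suc m = b" using b m by auto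
          then show ?thesis using b by (simp add: glue_def)
        qed
      qed
    qed
  qed
  have fU: "finite ?U" and fW: "finite ?W" using nz_set_finite[OF u] nz_set_finite[OF w] by auto
  have disj: "?U \<inter> ?W = {}"
  proof -
    have "x \<le> m" if xU: "x \<in> ?U" for x
    proof -
      obtain b where b: "x = Suc b" "u b \<noteq> 0" using xU by blast
      then have "b + u b \<le> m - 1" using VVD(4)[OF u] by blast
      then show ?thesis using b m by simp
    qed
    moreover have "Suc m < x" if xW: "x \<in> ?W" for x
    proof -
      obtain b where b: "x = b + Suc m" "w b \<noteq> 0" using xW by blast
      then have "0 < b" using VVD(3)[OF w] by blast
      then show ?thesis using b by simp
    qed
    ultimately show ?thesis by fastforce
  qed
  have n1: "1 \<notin> ?U \<union> ?W"
  proof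
    assume "1 \<in> ?U \<union> ?W"
    then show False
    proof
      assume "1 \<in> ?U"
      then obtain b where "1 = Suc b" "u b \<noteq> 0" by blast
      then show False using VVD(3)[OF u, of b] by simp
    next
      assume "1 \<in> ?W"
      then obtain b where "1 = b + Suc m" by blast
      then show False using m by simp
    qed
  qed
  have cU: "card ?U = nz u" by (simp add: nz_def card_image)
  have cW: "card ?W = nz w" by (simp add: nz_def card_image inj_on_def)
  have "card {a. ?z a \<noteq> 0} = Suc (card ?U + card ?W)"
    unfolding eq using fU fW disj n1 by (simp add: card_Un_disjoint)
  then show ?thesis using cU cW by (simp add: nz_def)
qed


definition cnt :: "nat \<Rightarrow> nat \<Rightarrow> nat" where
  "cnt n k = card {z \<in> VV n. nz z = k}"

lemma card_pairs:
  fixes f :: "'a \<Rightarrow> nat" and g :: "'b \<Rightarrow> nat"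
  assumes U: "finite U" and W: "finite W"
  shows "card {p \<in> U \<times> W. f (fst p) + g (snd p) = j} =
         (\<Sum>i\<le>j. card {u\<in>U. f u = i} * card {w\<in>W. g w = j - i})"
proof -
  have eq: "{p \<in> U \<times> W. f (fst p) + g (snd p) = j} = (\<Union>i\<in>{..j}. {u\<in>U. f u = i} \<times> {w\<in>W. g w = j - i})"
  proof
    show "{p \<in> U \<times> W. f (fst p) + g (snd p) = j} \<subseteq> (\<Union>i\<in>{..j}. {u\<in>U. f u = i} \<times> {w\<in>W. g w = j - i})"
    proof
      fix p assume p: "p \<in> {p \<in> U \<times> W. f (fst p) + g (snd p) = j}"
      obtain a b where ab: "p = (a, b)" by (cases p)
      with p have h: "a \<in> U" "b \<in> W" "f a + g b = j" by auto
      then have "f a \<le> j" "g b = j - f a" by auto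
      then show "p \<in> (\<Union>i\<in>{..j}. {u\<in>U. f u = i} \<times> {w\<in>W. g w = j - i})"
        using h ab by (intro UN_I[of "f a"]) auto
    qed
    show "(\<Union>i\<in>{..j}. {u\<in>U. f u = i} \<times> {w\<in>W. g w = j - i}) \<subseteq> {p \<in> U \<times> W. f (fst p) + g (snd p) = j}"
      by auto
  qed
  have "card (\<Union>i\<in>{..j}. {u\<in>U. f u = i} \<times> {w\<in>W. g w = j - i}) = (\<Sum>i\<le>j. card ({u\<in>U. f u = i} \<times> {w\<in>W. g w = j - i}))"
    by (rule card_UN_disjoint) (use U W in auto)
  then show ?thesis unfolding eq by (simp add: card_cartesian_product)
qed

lemma glue_inj: "0 < m \<Longrightarrow> inj_on (\<lambda>(u,w). glue m u w) (VV (m - 1) \<times> VV (n - m))"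
proof (rule inj_onI, clarify)
  fix u w u' w' assume m: "0 < m" and h: "u \<in> VV (m - 1)" "w \<in> VV (n - m)" "u' \<in> VV (m - 1)" "w' \<in> VV (n - m)"
    and e: "glue m u w = glue m u' w'"
  have "u = res 1 (m - 1) (glue m u w)" using res_glue1[OF h(1) m] by simp
  also have "\<dots> = u'" using e res_glue1[OF h(3) m] by simp
  finally have "u = u'" .
  have "w = res (Suc m) (n - m) (glue m u w)" using res_glue2[OF h(2) m] by simp
  also have "\<dots> = w'" using e res_glue2[OF h(4) m] by simp
  finally show "u = u' \<and> w = w'" using \<open>u = u'\<close> by simp
qed

lemma sh_inj: "inj_on sh (VV n)"
  by (rule inj_onI) (metis res_sh)

lemma cnt_decomp:
  "{z \<in> VV (Suc n). nz z = k} = sh ` {w \<in> VV n. nz w = k} \<union>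
     (\<Union>m\<in>{1..n}. (\<lambda>(u,w). glue m u w) ` {p \<in> VV (m - 1) \<times> VV (n - m). Suc (nz (fst p) + nz (snd p)) = k})"
  (is "?L = ?A \<union> ?B")
proof
  show "?L \<subseteq> ?A \<union> ?B"
  proof
    fix z assume "z \<in> ?L"
    then have z: "z \<in> VV (Suc n)" and k: "nz z = k" by auto
    show "z \<in> ?A \<union> ?B"
    proof (cases "z 1 = 0")
      case True
      have "res 1 n z \<in> VV n" "sh (res 1 n z) = z" using decomp0[OF z True] by auto
      moreover have "nz (res 1 n z) = k" using nz_sh[OF \<open>res 1 n z \<in> VV n\<close>] k \<open>sh (res 1 n z) = z\<close> by simp
      ultimately have "z \<in> ?A" by (metis (mono_tags, lifting) image_eqI mem_Collect_eq)
      then show ?thesis by simp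
    next
      case False
      define m where "m = z 1"
      have m0: "0 < m" using False by (simp add: m_def)
      note d = decomp1[OF z m_def[symmetric] m0]
      let ?u = "res 1 (m - 1) z" and ?w = "res (Suc m) (n - m) z"
      have "nz z = Suc (nz ?u + nz ?w)" using nz_glue[OF d(2) d(3) m0] d(4) by simp
      then have "(?u, ?w) \<in> {p \<in> VV (m - 1) \<times> VV (n - m). Suc (nz (fst p) + nz (snd p)) = k}"
        using d k by simp
      then have "z \<in> (\<lambda>(u,w). glue m u w) ` {p \<in> VV (m - 1) \<times> VV (n - m). Suc (nz (fst p) + nz (snd p)) = k}"
        using d(4) by (metis (no_types, lifting) case_prod_conv image_eqI)
      moreover have "m \<in> {1..n}" using d(1) m0 by simp
      ultimately show ?thesis by blast
    qed
  qed
  show "?A \<union> ?B \<subseteq> ?L"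
  proof
    fix z assume "z \<in> ?A \<union> ?B"
    then show "z \<in> ?L"
    proof
      assume "z \<in> ?A"
      then obtain w where w: "w \<in> VV n" "nz w = k" "z = sh w" by blast
      then show ?thesis using sh_VV[OF w(1)] nz_sh[OF w(1)] by simp
    next
      assume "z \<in> ?B"
      then obtain m u w where m: "m \<in> {1..n}" and uw: "u \<in> VV (m - 1)" "w \<in> VV (n - m)"
        "Suc (nz u + nz w) = k" and z: "z = glue m u w" by auto
      then show ?thesis using glue_VV[OF uw(1,2)] nz_glue[OF uw(1,2)] m by auto
    qed
  qed
qed

lemma cnt_Suc:
  "cnt (Suc n) k = cnt n k + (\<Sum>m\<in>{1..n}. card {p \<in> VV (m - 1) \<times> VV (n - m). Suc (nz (fst p) + nz (snd p)) = k})"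
proof -
  let ?A = "sh ` {w \<in> VV n. nz w = k}"
  let ?C = "\<lambda>m. {p \<in> VV (m - 1) \<times> VV (n - m). Suc (nz (fst p) + nz (snd p)) = k}"
  let ?B = "\<lambda>m. (\<lambda>(u,w). glue m u w) ` ?C m"
  have fA: "finite ?A" using finite_VV by auto
  have fC: "finite (?C m)" for m using finite_VV by auto
  have fB: "finite (?B m)" for m using fC by auto
  have cA: "card ?A = cnt n k"
    unfolding cnt_def by (rule card_image) (rule inj_on_subset[OF sh_inj], auto)
  have cB: "card (?B m) = card (?C m)" if "m \<in> {1..n}" for m
    by (rule card_image) (rule inj_on_subset[OF glue_inj], use that in auto)
  have disjB: "?B m \<inter> ?B m' = {}" if "m \<in> {1..n}" "m' \<in> {1..n}" "m \<noteq> m'" for m m'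
  proof -
    have v1: "z 1 = mm" if "z \<in> ?B mm" "mm \<in> {1..n}" for z mm
      using that by (auto simp: glue_def)
    show ?thesis
    proof (rule equals0I)
      fix z assume "z \<in> ?B m \<inter> ?B m'"
      then have "z 1 = m" "z 1 = m'" using v1 that by auto
      then show False using that by simp
    qed
  qed
  have disjAB: "?A \<inter> (\<Union>m\<in>{1..n}. ?B m) = {}"
  proof -
    have "z 1 = 0" if "z \<in> ?A" for z using that by (auto simp: sh_def)
    moreover have "z 1 \<noteq> 0" if "z \<in> (\<Union>m\<in>{1..n}. ?B m)" for z using that by (auto simp: glue_def)
    ultimately show ?thesis by fastforce
  qed
  have "cnt (Suc n) k = card (?A \<union> (\<Union>m\<in>{1..n}. ?B m))"
    unfolding cnt_def by (simp only: cnt_decomp)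
  also have "\<dots> = card ?A + card (\<Union>m\<in>{1..n}. ?B m)"
    by (rule card_Un_disjoint) (use fA fB disjAB in auto)
  also have "card (\<Union>m\<in>{1..n}. ?B m) = (\<Sum>m\<in>{1..n}. card (?B m))"
    by (rule card_UN_disjoint) (use fB disjB in auto)
  also have "\<dots> = (\<Sum>m\<in>{1..n}. card (?C m))"
    by (rule sum.cong) (use cB in auto)
  finally show ?thesis using cA by simp
qed

lemma cnt_0: "cnt 0 k = (if k = 0 then 1 else 0)"
proof -
  have "VV 0 = {\<lambda>_. 0}"
  proof
    show "VV 0 \<subseteq> {\<lambda>_. 0}"
    proof
      fix z assume z: "z \<in> VV 0"
      have "z a = 0" for a using VVD(3,4)[OF z, of a] by (cases "z a = 0") auto
      then show "z \<in> {\<lambda>_. 0}" by auto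
    qed
    show "{\<lambda>_. 0} \<subseteq> VV 0" by (auto intro!: VVI simp: lam_def)
  qed
  moreover have "nz (\<lambda>_. 0) = 0" by (simp add: nz_def)
  ultimately have "{z \<in> VV 0. nz z = k} = (if k = 0 then {\<lambda>_. 0} else {})" by auto
  then show ?thesis unfolding cnt_def by simp
qed

lemma cnt_eq_Gc: "cnt n k = Gc n k"
proof (induction n arbitrary: k rule: less_induct)
  case (less n)
  show ?case
  proof (cases n)
    case 0 then show ?thesis by (simp add: cnt_0 Gc_0)
  next
    case (Suc n')
    have IH: "cnt j i = Gc j i" if "j \<le> n'" for j i using less.IH[of j i] that Suc by simp
    show ?thesis
    proof (cases k)
      case 0
      have "card {p \<in> VV (m - 1) \<times> VV (n' - m). Suc (nz (fst p) + nz (snd p)) = k} = 0" for m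
        using 0 by simp
      then have "cnt (Suc n') 0 = cnt n' 0" using cnt_Suc[of n' 0] 0 by simp
      then show ?thesis using IH[of n' 0] Suc 0 by (simp add: Gc_def catalan_def)
    next
      case (Suc j)
      have "card {p \<in> VV (m - 1) \<times> VV (n' - m). Suc (nz (fst p) + nz (snd p)) = Suc j}
            = (\<Sum>i\<le>j. Gc (m - 1) i * Gc (n' - m) (j - i))" if m: "m \<in> {1..n'}" for m
      proof -
        have "card {p \<in> VV (m - 1) \<times> VV (n' - m). Suc (nz (fst p) + nz (snd p)) = Suc j}
            = card {p \<in> VV (m - 1) \<times> VV (n' - m). nz (fst p) + nz (snd p) = j}" by simp
        also have "\<dots> = (\<Sum>i\<le>j. cnt (m - 1) i * cnt (n' - m) (j - i))"
          unfolding cnt_def by (rule card_pairs[OF finite_VV finite_VV])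
        also have "\<dots> = (\<Sum>i\<le>j. Gc (m - 1) i * Gc (n' - m) (j - i))"
        proof -
          have "m - 1 \<le> n'" "n' - m \<le> n'" using m by auto
          then show ?thesis using IH[of "m - 1"] IH[of "n' - m"] by presburger
        qed
        finally show ?thesis .
      qed
      then have "cnt (Suc n') (Suc j) = Gc n' (Suc j) + (\<Sum>m\<in>{1..n'}. \<Sum>i\<le>j. Gc (m - 1) i * Gc (n' - m) (j - i))"
        using cnt_Suc[of n' "Suc j"] IH[of n'] by simp
      then show ?thesis using Gc_rec[of n' j] \<open>n = Suc n'\<close> Suc by simp
    qed
  qed
qed


lemma transfer:
  assumes bij: "bij_betw f L L'"
    and ord: "\<And>x y. x \<in> L \<Longrightarrow> y \<in> L \<Longrightarrow> le x y \<longleftrightarrow> le' (f x) (f y)"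
    and glb: "\<And>x. x \<in> L' \<Longrightarrow> \<exists>!m. is_glb L' le' ({y. covers L' le' y x} \<union> {x}) m"
  shows "Pop_poly L le q = Pop_poly L' le' q" "card (Pop L le ` L) = card (Pop L' le' ` L')"
proof -
  have inj: "inj_on f L" and img: "f ` L = L'" using bij by (auto simp: bij_betw_def)
  have fL: "x \<in> L \<Longrightarrow> f x \<in> L'" for x using img by blast
  have surj: "\<And>y. y \<in> L' \<Longrightarrow> \<exists>x\<in>L. y = f x" using img by blast
  have cov: "covers L le y x \<longleftrightarrow> covers L' le' (f y) (f x)" if x: "x \<in> L" and y: "y \<in> L" for x y
  proof -
    have "(\<exists>z\<in>L. le y z \<and> le z x \<and> z \<noteq> y \<and> z \<noteq> x) \<longleftrightarrow>
          (\<exists>z\<in>L'. le' (f y) z \<and> le' z (f x) \<and> z \<noteq> f y \<and> z \<noteq> f x)"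
    proof
      assume "\<exists>z\<in>L. le y z \<and> le z x \<and> z \<noteq> y \<and> z \<noteq> x"
      then obtain z where z: "z \<in> L" "le y z" "le z x" "z \<noteq> y" "z \<noteq> x" by blast
      have "f z \<noteq> f y" "f z \<noteq> f x" using z x y inj by (auto dest: inj_onD)
      then show "\<exists>z\<in>L'. le' (f y) z \<and> le' z (f x) \<and> z \<noteq> f y \<and> z \<noteq> f x"
        using z ord x y fL by blast
    next
      assume "\<exists>z\<in>L'. le' (f y) z \<and> le' z (f x) \<and> z \<noteq> f y \<and> z \<noteq> f x"
      then obtain z' where z': "z' \<in> L'" "le' (f y) z'" "le' z' (f x)" "z' \<noteq> f y" "z' \<noteq> f x" by blast
      obtain z where z: "z \<in> L" "z' = f z" using surj[OF z'(1)] by blast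
      then show "\<exists>z\<in>L. le y z \<and> le z x \<and> z \<noteq> y \<and> z \<noteq> x"
        using z' ord x y by blast
    qed
    moreover have "y \<noteq> x \<longleftrightarrow> f y \<noteq> f x" using inj x y by (auto dest: inj_onD)
    ultimately show ?thesis unfolding covers_def using ord[OF y x] x y fL by blast
  qed
  have covL: "covers L le y x \<Longrightarrow> y \<in> L \<and> x \<in> L" for x y by (simp add: covers_def)
  have covL': "covers L' le' y x \<Longrightarrow> y \<in> L' \<and> x \<in> L'" for x y by (simp add: covers_def)
  have covimg: "f ` {y. covers L le y x} = {y. covers L' le' y (f x)}" if x: "x \<in> L" for x
  proof
    show "f ` {y. covers L le y x} \<subseteq> {y. covers L' le' y (f x)}"
      using cov[OF x] covL by blast
    show "{y. covers L' le' y (f x)} \<subseteq> f ` {y. covers L le y x}"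
    proof
      fix y' assume "y' \<in> {y. covers L' le' y (f x)}"
      then have c: "covers L' le' y' (f x)" by simp
      then obtain y where y: "y \<in> L" "y' = f y" using covL' surj by blast
      then have "covers L le y x" using cov[OF x y(1)] c by simp
      then show "y' \<in> f ` {y. covers L le y x}" using y by blast
    qed
  qed
  have upimg: "f ` upcovers L le x = upcovers L' le' (f x)" if x: "x \<in> L" for x
  proof
    show "f ` upcovers L le x \<subseteq> upcovers L' le' (f x)"
      unfolding upcovers_def using cov[OF _ x] covL by blast
    show "upcovers L' le' (f x) \<subseteq> f ` upcovers L le x"
    proof
      fix y' assume "y' \<in> upcovers L' le' (f x)"
      then have c: "covers L' le' (f x) y'" by (simp add: upcovers_def)
      then obtain y where y: "y \<in> L" "y' = f y" using covL' surj by blast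
      then have "covers L le x y" using cov[OF y(1) x] c by simp
      then show "y' \<in> f ` upcovers L le x" using y by (auto simp: upcovers_def)
    qed
  qed
  have cardup: "card (upcovers L le x) = card (upcovers L' le' (f x))" if x: "x \<in> L" for x
  proof -
    have "inj_on f (upcovers L le x)" by (rule inj_on_subset[OF inj]) (auto simp: upcovers_def covers_def)
    then show ?thesis using upimg[OF x] card_image by metis
  qed
  have glbtr: "is_glb L le S m \<longleftrightarrow> is_glb L' le' (f ` S) (f m)" if S: "S \<subseteq> L" and m: "m \<in> L" for S m
  proof
    assume g: "is_glb L le S m"
    show "is_glb L' le' (f ` S) (f m)" unfolding is_glb_def
    proof (intro conjI ballI impI)
      show "f m \<in> L'" using fL m by blast
      fix s' assume "s' \<in> f ` S"
      then obtain s where "s \<in> S" "s' = f s" by blast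
      then show "le' (f m) s'" using g S m ord unfolding is_glb_def by blast
    next
      fix z' assume z': "z' \<in> L'" "\<forall>s\<in>f ` S. le' z' s"
      obtain z where z: "z \<in> L" "z' = f z" using surj[OF z'(1)] by blast
      have "\<forall>s\<in>S. le z s" using z z' S ord by blast
      then have "le z m" using g z unfolding is_glb_def by blast
      then show "le' z' (f m)" using ord[OF z(1) m] z by simp
    qed
  next
    assume g: "is_glb L' le' (f ` S) (f m)"
    show "is_glb L le S m" unfolding is_glb_def
    proof (intro conjI ballI impI)
      show "m \<in> L" by (rule m)
      fix s assume "s \<in> S"
      then show "le m s" using g S m ord unfolding is_glb_def by blast
    next
      fix z assume z: "z \<in> L" "\<forall>s\<in>S. le z s"
      have "\<forall>s\<in>f ` S. le' (f z) s" using z S ord by blast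
      then have "le' (f z) (f m)" using g z fL unfolding is_glb_def by blast
      then show "le z m" using ord[OF z(1) m] by simp
    qed
  qed
  have Poptr: "Pop L le x \<in> L \<and> f (Pop L le x) = Pop L' le' (f x)" if x: "x \<in> L" for x
  proof -
    let ?S = "{y. covers L le y x} \<union> {x}"
    have S: "?S \<subseteq> L" using covL x by blast
    have fS: "f ` ?S = {y. covers L' le' y (f x)} \<union> {f x}" using covimg[OF x] by auto
    obtain m' where m': "is_glb L' le' (f ` ?S) m'" and uq: "\<And>m''. is_glb L' le' (f ` ?S) m'' \<Longrightarrow> m'' = m'"
      using glb[OF fL[OF x]] unfolding fS by blast
    have "m' \<in> L'" using m' by (simp add: is_glb_def)
    then obtain m where m: "m \<in> L" "m' = f m" using surj by blast
    have gm: "is_glb L le ?S m" using glbtr[OF S m(1)] m' m by simp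
    have "Pop L le x = m" unfolding Pop_def meet_def
    proof (rule the_equality[of "is_glb L le ?S" m, OF gm])
      fix m2 assume g2: "is_glb L le ?S m2"
      then have m2: "m2 \<in> L" by (simp add: is_glb_def)
      then have "is_glb L' le' (f ` ?S) (f m2)" using glbtr[OF S m2] g2 by simp
      then have "f m2 = f m" using uq m by simp
      then show "m2 = m" using inj m2 m(1) by (auto dest: inj_onD)
    qed
    moreover have "Pop L' le' (f x) = m'" unfolding Pop_def meet_def
      using the_equality[of "is_glb L' le' (f ` ?S)" m', OF m' uq] fS by simp
    ultimately show ?thesis using m by simp
  qed
  have imgPop: "Pop L' le' ` L' = f ` (Pop L le ` L)"
  proof
    show "Pop L' le' ` L' \<subseteq> f ` Pop L le ` L"
    proof
      fix y assume "y \<in> Pop L' le' ` L'"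
      then obtain x' where x': "x' \<in> L'" "y = Pop L' le' x'" by blast
      then obtain x where x: "x \<in> L" "x' = f x" using surj by blast
      have "y = f (Pop L le x)" using Poptr[OF x(1)] x' x by simp
      then show "y \<in> f ` Pop L le ` L" using x(1) by blast
    qed
    show "f ` Pop L le ` L \<subseteq> Pop L' le' ` L'" using Poptr fL by auto
  qed
  have PopL: "Pop L le ` L \<subseteq> L" using Poptr by auto
  have injP: "inj_on f (Pop L le ` L)" by (rule inj_on_subset[OF inj PopL])
  show "card (Pop L le ` L) = card (Pop L' le' ` L')"
    unfolding imgPop using card_image[OF injP] by simp
  have "Pop_poly L' le' q = (\<Sum>b\<in>f ` (Pop L le ` L). q ^ card (upcovers L' le' b))"
    unfolding Pop_poly_def imgPop ..
  also have "\<dots> = (\<Sum>b\<in>Pop L le ` L. q ^ card (upcovers L' le' (f b)))"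
    by (rule sum.reindex[OF injP, unfolded comp_def])
  also have "\<dots> = (\<Sum>b\<in>Pop L le ` L. q ^ card (upcovers L le b))"
    by (rule sum.cong) (use cardup PopL in auto)
  finally show "Pop_poly L le q = Pop_poly L' le' q" unfolding Pop_poly_def by simp
qed


lemma R_inj: "inj_on R (Brk N)"
proof (rule inj_onI)
  fix r s assume r: "r \<in> Brk N" and s: "s \<in> Brk N" and e: "R r = R s"
  have "lef r s" using R_mono_lef[OF r s] e by simp
  moreover have "lef s r" using R_mono_lef[OF s r] e by simp
  ultimately show "r = s" by (rule lef_antisym)
qed

lemma invs_img: "invs ` Tam N = R ` Brk N"
  using Tam_to_Brk Brk_to_Tam by fastforce

lemma invs_inj_Tam: "inj_on invs (Tam N)"
proof (rule inj_onI)
  fix xs ys assume "xs \<in> Tam N" "ys \<in> Tam N" "invs xs = invs ys"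
  then show "xs = ys" by (intro invs_inj) (auto simp: Tam_def perms_def)
qed

definition phi :: "nat \<Rightarrow> nat list \<Rightarrow> nat \<Rightarrow> nat" where
  "phi N xs = the_inv_into (Brk N) R (invs xs)"

lemma phi_props:
  assumes xs: "xs \<in> Tam N"
  shows "phi N xs \<in> Brk N" "R (phi N xs) = invs xs"
proof -
  have "invs xs \<in> R ` Brk N" using invs_img xs by blast
  then show "phi N xs \<in> Brk N" "R (phi N xs) = invs xs"
    unfolding phi_def using the_inv_into_into[OF R_inj] f_the_inv_into_f[OF R_inj] by auto
qed

lemma phi_bij: "bij_betw (phi N) (Tam N) (Brk N)"
proof -
  have b1: "bij_betw invs (Tam N) (R ` Brk N)"
    unfolding bij_betw_def using invs_inj_Tam invs_img by blast
  have b2: "bij_betw (the_inv_into (Brk N) R) (R ` Brk N) (Brk N)"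
    by (rule bij_betw_the_inv_into) (simp add: bij_betw_def R_inj)
  have "bij_betw (the_inv_into (Brk N) R \<circ> invs) (Tam N) (Brk N)" by (rule bij_betw_trans[OF b1 b2])
  moreover have "phi N = the_inv_into (Brk N) R \<circ> invs" by (rule ext) (simp add: phi_def)
  ultimately show ?thesis by simp
qed

lemma phi_ord:
  assumes "xs \<in> Tam N" "ys \<in> Tam N"
  shows "weak_le xs ys \<longleftrightarrow> lef (phi N xs) (phi N ys)"
  using phi_props[OF assms(1)] phi_props[OF assms(2)] R_mono_lef[of "phi N xs" N "phi N ys"]
  by (simp add: weak_le_def)

lemma Brk_glb: "x \<in> Brk N \<Longrightarrow> \<exists>!m. is_glb (Brk N) lef ({y. covers (Brk N) lef y x} \<union> {x}) m"
  using P_glb is_glb_unique by blast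

lemma Tam_Brk:
  "Pop_poly (Tam N) weak_le q = Pop_poly (Brk N) lef q"
  "card (Pop (Tam N) weak_le ` Tam N) = card (Pop (Brk N) lef ` Brk N)"
  using transfer[OF phi_bij phi_ord Brk_glb] by auto

lemma Pop_img_Brk: "Pop (Brk N) lef ` Brk N = {z. Good N z}"
proof -
  have "Pop (Brk N) lef ` Brk N = P ` Brk N" using Pop_Brk by (auto intro!: image_cong)
  then show ?thesis using image_P by simp
qed

lemma Pop_img_VV: "Pop (Brk (Suc n)) lef ` Brk (Suc n) = VV n"
  unfolding Pop_img_Brk using Good_VV by blast

lemma Pop_poly_Brk:
  "Pop_poly (Brk (Suc n)) lef q = (\<Sum>k\<le>n. real (Gc n k) * q ^ (n - k))"
proof -
  have "Pop_poly (Brk (Suc n)) lef q = (\<Sum>z\<in>VV n. q ^ card (upcovers (Brk (Suc n)) lef z))"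
    unfolding Pop_poly_def Pop_img_VV ..
  also have "\<dots> = (\<Sum>z\<in>VV n. q ^ (n - nz z))"
  proof (rule sum.cong)
    fix z assume z: "z \<in> VV n"
    then have g: "Good (Suc n) z" using Good_VV by blast
    have "card (upcovers (Brk (Suc n)) lef z) = card (EE (Suc n) z)"
      by (rule card_upcovers[OF GoodD(1)[OF g]])
    also have "\<dots> = n - nz z" using card_EE_good[OF g] by simp
    finally show "q ^ card (upcovers (Brk (Suc n)) lef z) = q ^ (n - nz z)" by simp
  qed simp
  also have "\<dots> = (\<Sum>k\<le>n. \<Sum>z\<in>{z. z \<in> VV n \<and> nz z = k}. q ^ (n - nz z))"
    by (rule sum.group[symmetric]) (use finite_VV nz_le in auto)
  also have "\<dots> = (\<Sum>k\<le>n. real (cnt n k) * q ^ (n - k))"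
  proof (rule sum.cong)
    fix k
    have "(\<Sum>z\<in>{z. z \<in> VV n \<and> nz z = k}. q ^ (n - nz z)) = (\<Sum>z\<in>{z. z \<in> VV n \<and> nz z = k}. q ^ (n - k))"
      by (rule sum.cong) auto
    also have "\<dots> = real (cnt n k) * q ^ (n - k)" by (simp add: cnt_def)
    finally show "(\<Sum>z\<in>{z. z \<in> VV n \<and> nz z = k}. q ^ (n - nz z)) = real (cnt n k) * q ^ (n - k)" .
  qed simp
  finally show ?thesis by (simp add: cnt_eq_Gc)
qed

lemma card_VV: "card (VV m) = (\<Sum>k\<le>m. Gc m k)"
proof -
  have "card (VV m) = (\<Sum>z\<in>VV m. 1)" by simp
  also have "\<dots> = (\<Sum>k\<le>m. \<Sum>z\<in>{z. z \<in> VV m \<and> nz z = k}. 1)"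
    by (rule sum.group[symmetric]) (use finite_VV nz_le in auto)
  also have "\<dots> = (\<Sum>k\<le>m. cnt m k)" by (simp add: cnt_def)
  finally show ?thesis by (simp add: cnt_eq_Gc)
qed

lemma real_Gc: "real (Gc n k) = (1 / (real k + 1)) * real ((2 * k) choose k) * real (n choose (2 * k))"
proof -
  have "real (k + 1) * real (catalan k) = real ((2*k) choose k)"
    using catalan_mult[of k] by (metis of_nat_mult)
  then have "real (catalan k) = real ((2*k) choose k) / (real k + 1)"
    by (simp add: field_simps)
  then show ?thesis by (simp add: Gc_def)
qed

theorem theorem1p2:
  fixes n :: nat and q :: real
  shows "Pop_poly (Tam (n + 1)) weak_le q =
           (\<Sum>k = 0..n div 2. (1 / (real k + 1)) * real ((2 * k) choose k) * real (n choose (2 * k)) * q ^ (n - k))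
         \<and> (n \<ge> 1 \<longrightarrow> card (Pop (Tam n) weak_le ` Tam n) = motzkin (n - 1))"
proof
  have "Pop_poly (Tam (n + 1)) weak_le q = (\<Sum>k\<le>n. real (Gc n k) * q ^ (n - k))"
    using Tam_Brk(1)[of "Suc n" q] Pop_poly_Brk[of n q] by simp
  also have "\<dots> = (\<Sum>k = 0..n div 2. real (Gc n k) * q ^ (n - k))"
  proof (rule sum.mono_neutral_right)
    show "finite {..n}" by simp
    show "{0..n div 2} \<subseteq> {..n}" by auto
    show "\<forall>i\<in>{..n} - {0..n div 2}. real (Gc n i) * q ^ (n - i) = 0"
    proof
      fix i assume "i \<in> {..n} - {0..n div 2}"
      then have "n < 2 * i" by auto
      then show "real (Gc n i) * q ^ (n - i) = 0" by (simp add: Gc_def)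
    qed
  qed
  also have "\<dots> = (\<Sum>k = 0..n div 2. (1 / (real k + 1)) * real ((2 * k) choose k) * real (n choose (2 * k)) * q ^ (n - k))"
    by (simp add: real_Gc)
  finally show "Pop_poly (Tam (n + 1)) weak_le q =
           (\<Sum>k = 0..n div 2. (1 / (real k + 1)) * real ((2 * k) choose k) * real (n choose (2 * k)) * q ^ (n - k))" .
next
  show "n \<ge> 1 \<longrightarrow> card (Pop (Tam n) weak_le ` Tam n) = motzkin (n - 1)"
  proof
    assume "n \<ge> 1"
    then obtain m where n: "n = Suc m" by (cases n) auto
    have "card (Pop (Tam n) weak_le ` Tam n) = card (VV m)"
      using Tam_Brk(2)[of n] Pop_img_VV[of m] n by simp
    also have "\<dots> = motzkin m" unfolding card_VV motzkin_def Gc_def by (simp add: mult.commute)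
    finally show "card (Pop (Tam n) weak_le ` Tam n) = motzkin (n - 1)" using n by simp
  qed
qed

end
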